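(* Let $Y$ be a complex Banach space, $U:\mathcal B(\mathcal H)\to Y$ a non-null bounded linear operator with $\|U\|<\lambda$, $1\le p<\infty$, and $Z=(\mathbb C^n,\|\cdot\|)$ a Banach space whose canonical basis is normalized $1$-unconditional. Then for every $n$, $$\frac{R_\lambda(\mathbb D,p,U)}{n}\le AP_\lambda(B_Z,p,U)\le\|Id:Z\to\ell_1^n\|\frac{R_\lambda(\mathbb D,p,U)}{n^{1/p}}.$$
   Context: $\mathcal B(\mathcal H)$: bounded operators on a complex Hilbert space; $\mathbb D$ the open unit disc. For a simply connected complete Reinhardt domain $\Omega\subset\mathbb C^k$, bounded pluriharmonic $f:\Omega\to\mathcal B(\mathcal H)$ are written $f(z)=\sum_\alpha a_\alpha z^\alpha+\sum_{|\alpha|\ge1}b_\alpha^*\bar z^\alpha$ ($b_0=0$), $\|f\|_\Omega=\sup\|f(z)\|$. $R_\lambda(\Omega,p,U)$: supremum of $r\ge0$ with $\sup_{z\in r\Omega}\sum_\alpha(\|U(a_\alpha)\|^p+\|U(b_\alpha)\|^p)|z^\alpha|^p\le\lambda^p\|f\|_\Omega^p$ for all such $f$. $AP_\lambda(\Omega,p,U)$: supremum of $\frac1k\sum_{i=1}^kr_i$ over $r\in\mathbb R^k_{\ge0}$ with $\sum_\alpha(\|U(a_\alpha)\|^p+\|U(b_\alpha)\|^p)r^{p\alpha}\le\lambda^p\|f\|_\Omega^p$ for all such $f$. $B_Z$ open unit ball of $Z$. *)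

theory Defs
  imports "HOL-Analysis.Analysis"
begin

(* A complex Hilbert space H is modelled as a real Hilbert space 'h with an orthogonal
   complex structure J (multiplication by i): J o J = -id, <Jx,Jy> = <x,y>.
   Then <x,y>_C = <x,y> + i <x,Jy> makes 'h a complex Hilbert space, and every complex
   Hilbert space arises this way. *)
definition hilbert_cstruct :: "('h::{real_inner,complete_space} \<Rightarrow>\<^sub>L 'h) \<Rightarrow> bool" where
  "hilbert_cstruct J \<longleftrightarrow> J o\<^sub>L J = - id_blinfun \<and> (\<forall>x y. inner (J x) (J y) = inner x y)"

(* B(H): bounded complex-linear operators = bounded real-linear operators commuting with J *)
definition Bop :: "('h::real_normed_vector \<Rightarrow>\<^sub>L 'h) \<Rightarrow> ('h \<Rightarrow>\<^sub>L 'h) set" where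
  "Bop J = {T. T o\<^sub>L J = J o\<^sub>L T}"

definition cscale :: "('h::real_normed_vector \<Rightarrow>\<^sub>L 'h) \<Rightarrow> complex \<Rightarrow> ('h \<Rightarrow>\<^sub>L 'h) \<Rightarrow> ('h \<Rightarrow>\<^sub>L 'h)" where
  "cscale J c T = Re c *\<^sub>R T + Im c *\<^sub>R (J o\<^sub>L T)"

(* Hilbert-space adjoint (for J-commuting operators the real and complex adjoints agree) *)
definition hadj :: "('h::{real_inner,complete_space} \<Rightarrow>\<^sub>L 'h) \<Rightarrow> ('h \<Rightarrow>\<^sub>L 'h)" where
  "hadj T = (THE S :: 'h \<Rightarrow>\<^sub>L 'h. \<forall>x y. inner (T x) y = inner x (S y))"

(* A complex Banach space Y is a real Banach space 'y with a complex structure Jy such that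
   c*y := Re c * y + Im c * Jy y satisfies ||c y|| = |c| ||y|| *)
definition banach_cstruct :: "('y::banach \<Rightarrow> 'y) \<Rightarrow> bool" where
  "banach_cstruct Jy \<longleftrightarrow> linear Jy \<and> (\<forall>x. Jy (Jy x) = - x) \<and>
     (\<forall>c x. norm (Re c *\<^sub>R x + Im c *\<^sub>R Jy x) = cmod c * norm x)"

definition cscaleY :: "('y::real_normed_vector \<Rightarrow> 'y) \<Rightarrow> complex \<Rightarrow> 'y \<Rightarrow> 'y" where
  "cscaleY Jy c y = Re c *\<^sub>R y + Im c *\<^sub>R Jy y"

definition bounded_clinear_U ::
  "('h::{real_inner,complete_space} \<Rightarrow>\<^sub>L 'h) \<Rightarrow> ('y::banach \<Rightarrow> 'y) \<Rightarrow> (('h \<Rightarrow>\<^sub>L 'h) \<Rightarrow> 'y) \<Rightarrow> bool" where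
  "bounded_clinear_U J Jy U \<longleftrightarrow>
     (\<forall>S\<in>Bop J. \<forall>T\<in>Bop J. U (S + T) = U S + U T) \<and>
     (\<forall>c. \<forall>T\<in>Bop J. U (cscale J c T) = cscaleY Jy c (U T)) \<and>
     (\<exists>K. \<forall>T\<in>Bop J. norm (U T) \<le> K * norm T)"

definition opnorm_U :: "('h::{real_inner,complete_space} \<Rightarrow>\<^sub>L 'h) \<Rightarrow> (('h \<Rightarrow>\<^sub>L 'h) \<Rightarrow> 'y::banach) \<Rightarrow> real" where
  "opnorm_U J U = Sup {norm (U T) | T. T \<in> Bop J \<and> norm T \<le> 1}"

definition monom :: "complex ^ 'k::finite \<Rightarrow> ('k \<Rightarrow> nat) \<Rightarrow> complex" where
  "monom z \<alpha> = (\<Prod>i\<in>UNIV. (z $ i) ^ \<alpha> i)"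

definition rmonom :: "real ^ 'k::finite \<Rightarrow> ('k \<Rightarrow> nat) \<Rightarrow> real" where
  "rmonom r \<alpha> = (\<Prod>i\<in>UNIV. (r $ i) ^ \<alpha> i)"

definition ph_rep ::
  "('h::{real_inner,complete_space} \<Rightarrow>\<^sub>L 'h) \<Rightarrow> (complex ^ 'k::finite) set \<Rightarrow>
   (complex ^ 'k \<Rightarrow> ('h \<Rightarrow>\<^sub>L 'h)) \<Rightarrow> (('k \<Rightarrow> nat) \<Rightarrow> ('h \<Rightarrow>\<^sub>L 'h)) \<Rightarrow>
   (('k \<Rightarrow> nat) \<Rightarrow> ('h \<Rightarrow>\<^sub>L 'h)) \<Rightarrow> bool" where
  "ph_rep J \<Omega> f a b \<longleftrightarrow>
     (\<forall>\<alpha>. a \<alpha> \<in> Bop J \<and> b \<alpha> \<in> Bop J) \<and> b (\<lambda>_. 0) = 0 \<and>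
     (\<forall>z\<in>\<Omega>. (\<lambda>\<alpha>. cscale J (monom z \<alpha>) (a \<alpha>)) summable_on UNIV \<and>
              (\<lambda>\<alpha>. cscale J (cnj (monom z \<alpha>)) (hadj (b \<alpha>))) summable_on UNIV \<and>
              f z = (\<Sum>\<^sub>\<infinity>\<alpha>. cscale J (monom z \<alpha>) (a \<alpha>))
                  + (\<Sum>\<^sub>\<infinity>\<alpha>. cscale J (cnj (monom z \<alpha>)) (hadj (b \<alpha>))))"

definition supnorm :: "(complex ^ 'k::finite) set \<Rightarrow> (complex ^ 'k \<Rightarrow> 'a::real_normed_vector) \<Rightarrow> real" where
  "supnorm \<Omega> f = (SUP z\<in>\<Omega>. norm (f z))"

(* the extended-real sum of nonnegative terms t is <= B *)
definition nnsum_le :: "('i \<Rightarrow> real) \<Rightarrow> real \<Rightarrow> bool" where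
  "nnsum_le t B \<longleftrightarrow> t summable_on UNIV \<and> (\<Sum>\<^sub>\<infinity>i. t i) \<le> B"

definition Rlam ::
  "('h::{real_inner,complete_space} \<Rightarrow>\<^sub>L 'h) \<Rightarrow> (('h \<Rightarrow>\<^sub>L 'h) \<Rightarrow> 'y::banach) \<Rightarrow> real \<Rightarrow>
   (complex ^ 'k::finite) set \<Rightarrow> real \<Rightarrow> real" where
  "Rlam J U lam \<Omega> p = Sup {r. r \<ge> 0 \<and>
     (\<forall>f a b. ph_rep J \<Omega> f a b \<and> bounded (f ` \<Omega>) \<longrightarrow>
        (\<forall>z\<in>(\<lambda>w. r *\<^sub>R w) ` \<Omega>.
           nnsum_le (\<lambda>\<alpha>. (norm (U (a \<alpha>)) powr p + norm (U (b \<alpha>)) powr p) * cmod (monom z \<alpha>) powr p)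
                    (lam powr p * supnorm \<Omega> f powr p)))}"

definition APlam ::
  "('h::{real_inner,complete_space} \<Rightarrow>\<^sub>L 'h) \<Rightarrow> (('h \<Rightarrow>\<^sub>L 'h) \<Rightarrow> 'y::banach) \<Rightarrow> real \<Rightarrow>
   (complex ^ 'k::finite) set \<Rightarrow> real \<Rightarrow> real" where
  "APlam J U lam \<Omega> p = Sup {(\<Sum>i\<in>UNIV. r $ i) / real CARD('k) | r :: real ^ 'k.
     (\<forall>i. r $ i \<ge> 0) \<and>
     (\<forall>f a b. ph_rep J \<Omega> f a b \<and> bounded (f ` \<Omega>) \<longrightarrow>
        nnsum_le (\<lambda>\<alpha>. (norm (U (a \<alpha>)) powr p + norm (U (b \<alpha>)) powr p) * rmonom r \<alpha> powr p)
                 (lam powr p * supnorm \<Omega> f powr p))}"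

definition unit_disc1 :: "(complex ^ 1) set" where
  "unit_disc1 = {z. cmod (z $ 1) < 1}"

definition is_cnorm :: "(complex ^ 'n::finite \<Rightarrow> real) \<Rightarrow> bool" where
  "is_cnorm N \<longleftrightarrow> (\<forall>x y. N (x + y) \<le> N x + N y) \<and> (\<forall>c x. N (c *s x) = cmod c * N x) \<and>
                  (\<forall>x. N x = 0 \<longrightarrow> x = 0)"

definition normalized_1_unconditional :: "(complex ^ 'n::finite \<Rightarrow> real) \<Rightarrow> bool" where
  "normalized_1_unconditional N \<longleftrightarrow> (\<forall>i. N (axis i 1) = 1) \<and>
     (\<forall>x \<theta>. (\<forall>i. cmod (\<theta> $ i) \<le> 1) \<longrightarrow> N (\<chi> i. \<theta> $ i * x $ i) \<le> N x)"

definition id_to_l1_norm :: "(complex ^ 'n::finite \<Rightarrow> real) \<Rightarrow> real" where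
  "id_to_l1_norm N = Sup {(\<Sum>i\<in>UNIV. cmod (z $ i)) | z. N z \<le> 1}"

definition unit_ball_N :: "(complex ^ 'n::finite \<Rightarrow> real) \<Rightarrow> (complex ^ 'n) set" where
  "unit_ball_N N = {z. N z < 1}"

end

theory Submission
  imports Defs
begin


section \<open>Complex structure J\<close>

lemma J_JJ:
  assumes "hilbert_cstruct J" shows "J (J y) = - y"
proof -
  have "(J o\<^sub>L J) y = (- id_blinfun) y" using assms unfolding hilbert_cstruct_def by simp
  then show ?thesis by (simp add: uminus_blinfun.rep_eq)
qed

lemma J_inner: assumes "hilbert_cstruct J" shows "inner (J x) (J y) = inner x y"
  using assms unfolding hilbert_cstruct_def by simp

lemma J_orth: assumes "hilbert_cstruct J" shows "inner y (J y) = 0"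
proof -
  have "inner (J y) (J (J y)) = inner y (J y)" using J_inner[OF assms] by simp
  then have "inner (J y) (- y) = inner y (J y)" using J_JJ[OF assms] by simp
  then show ?thesis by (simp add: inner_commute)
qed

lemma J_vec_norm:
  assumes "hilbert_cstruct J"
  shows "norm (Re c *\<^sub>R y + Im c *\<^sub>R J y) = cmod c * norm y"
proof -
  let ?a = "Re c" and ?b = "Im c"
  have 1: "inner (J y) (J y) = inner y y" by (rule J_inner[OF assms])
  have 2: "inner y (J y) = 0" by (rule J_orth[OF assms])
  have 3: "inner (J y) y = 0" using 2 by (simp add: inner_commute)
  have "inner (?a *\<^sub>R y + ?b *\<^sub>R J y) (?a *\<^sub>R y + ?b *\<^sub>R J y)
      = ?a * ?a * inner y y + ?a * ?b * inner y (J y) + ?b * ?a * inner (J y) y + ?b * ?b * inner (J y) (J y)"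
    by (simp only: inner_add_left inner_add_right inner_scaleR_left inner_scaleR_right) (simp add: algebra_simps)
  also have "\<dots> = (?a * ?a + ?b * ?b) * inner y y" using 1 2 3 by (simp add: algebra_simps)
  also have "\<dots> = (cmod c * norm y)^2"
    by (simp add: cmod_def power2_norm_eq_inner[symmetric] power_mult_distrib power2_eq_square)
  finally have "(norm (Re c *\<^sub>R y + Im c *\<^sub>R J y))^2 = (cmod c * norm y)^2"
    by (simp add: power2_norm_eq_inner)
  then show ?thesis
    by (simp add: power2_eq_iff_nonneg)
qed

lemma cscale_apply: "blinfun_apply (cscale J c T) x = Re c *\<^sub>R T x + Im c *\<^sub>R J (T x)"
  unfolding cscale_def by (simp add: plus_blinfun.rep_eq scaleR_blinfun.rep_eq)

lemma cscale_mult: "cscale J c (cscale J d T) = cscale J (c * d) T" if "hilbert_cstruct J"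
proof (rule blinfun_eqI)
  fix x
  show "cscale J c (cscale J d T) x = cscale J (c * d) T x"
    unfolding cscale_apply
    by (simp add: blinfun.add_right blinfun.scaleR_right J_JJ[OF that] algebra_simps)
qed

lemma cscale_one[simp]: "cscale J 1 T = T"
  unfolding cscale_def by simp

lemma cscale_zero[simp]: "cscale J 0 T = 0"
  unfolding cscale_def by simp

lemma cscale_zero2[simp]: "cscale J c 0 = 0"
  unfolding cscale_def by (simp add: blinfun_eqI)

lemma cscale_of_real: "cscale J (complex_of_real t) T = t *\<^sub>R T"
  unfolding cscale_def by simp

lemma cscale_scaleR: "cscale J c (t *\<^sub>R T) = cscale J (complex_of_real t * c) T"
  by (rule blinfun_eqI) (simp add: cscale_apply scaleR_blinfun.rep_eq blinfun.scaleR_right mult.commute)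

lemma cscale_sum: "cscale J (\<Sum>i\<in>A. c i) T = (\<Sum>i\<in>A. cscale J (c i) T)"
  unfolding cscale_def by (simp add: Re_sum Im_sum scaleR_sum_left sum.distrib)

lemma norm_cscale:
  assumes "hilbert_cstruct J"
  shows "norm (cscale J c T) = cmod c * norm T"
proof -
  have le: "norm (cscale J c T) \<le> cmod c * norm T" for c T
  proof (rule norm_blinfun_bound)
    fix x
    have "norm (cscale J c T x) = cmod c * norm (T x)"
      unfolding cscale_apply by (rule J_vec_norm[OF assms])
    also have "\<dots> \<le> cmod c * (norm T * norm x)"
      by (intro mult_left_mono norm_blinfun) auto
    finally show "norm (cscale J c T x) \<le> cmod c * norm T * norm x" by simp
  qed simp
  show ?thesis
  proof (cases "c = 0")
    case True then show ?thesis by simp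
  next
    case False
    have "T = cscale J (inverse c) (cscale J c T)"
      using False by (simp add: cscale_mult[OF assms])
    then have "norm T \<le> cmod (inverse c) * norm (cscale J c T)"
      using le[of "inverse c" "cscale J c T"] by metis
    then have "cmod c * norm T \<le> cmod c * (cmod (inverse c) * norm (cscale J c T))"
      by (intro mult_left_mono) auto
    moreover have "cmod c * (cmod (inverse c) * norm (cscale J c T)) = norm (cscale J c T)"
      using False by (simp add: norm_inverse)
    ultimately have "cmod c * norm T \<le> norm (cscale J c T)" by linarith
    with le[of c T] show ?thesis by simp
  qed
qed

lemma Bop_zero[simp]: "0 \<in> Bop J"
  unfolding Bop_def by (auto intro: blinfun_eqI simp: blinfun.zero_right)

lemma Bop_scaleR: "T \<in> Bop J \<Longrightarrow> t *\<^sub>R T \<in> Bop J"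
  unfolding Bop_def
proof (clarsimp)
  assume "T o\<^sub>L J = J o\<^sub>L T"
  then have "\<And>x. T (J x) = J (T x)" by (metis blinfun_apply_blinfun_compose)
  then show "(t *\<^sub>R T) o\<^sub>L J = J o\<^sub>L (t *\<^sub>R T)"
    by (intro blinfun_eqI) (simp add: scaleR_blinfun.rep_eq blinfun.scaleR_right)
qed

lemma U_add: "bounded_clinear_U J Jy U \<Longrightarrow> S \<in> Bop J \<Longrightarrow> T \<in> Bop J \<Longrightarrow> U (S + T) = U S + U T"
  unfolding bounded_clinear_U_def by blast

lemma U_zero: "bounded_clinear_U J Jy U \<Longrightarrow> U 0 = 0"
  using U_add[of J Jy U 0 0] by simp

lemma U_scaleR:
  assumes "bounded_clinear_U J Jy U" "T \<in> Bop J"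
  shows "U (t *\<^sub>R T) = t *\<^sub>R U T"
proof -
  have "U (cscale J (complex_of_real t) T) = cscaleY Jy (complex_of_real t) (U T)"
    using assms unfolding bounded_clinear_U_def by blast
  then show ?thesis by (simp add: cscale_of_real cscaleY_def)
qed

lemma U_bound:
  assumes "bounded_clinear_U J Jy U" "T \<in> Bop J"
  shows "norm (U T) \<le> opnorm_U J U * norm T"
proof -
  obtain K where K: "\<forall>T\<in>Bop J. norm (U T) \<le> K * norm T"
    using assms(1) unfolding bounded_clinear_U_def by blast
  let ?S = "{norm (U T) | T. T \<in> Bop J \<and> norm T \<le> 1}"
  have bdd: "bdd_above ?S"
  proof (rule bdd_aboveI[of _ "\<bar>K\<bar>"])
    fix x assume "x \<in> ?S"
    then obtain T where T: "x = norm (U T)" "T \<in> Bop J" "norm T \<le> 1" by blast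
    have "K * norm T \<le> \<bar>K\<bar> * norm T" by (intro mult_right_mono) auto
    also have "\<dots> \<le> \<bar>K\<bar> * 1" using T(3) by (intro mult_left_mono) auto
    finally have "K * norm T \<le> \<bar>K\<bar>" by simp
    then show "x \<le> \<bar>K\<bar>" using K T by fastforce
  qed
  show ?thesis
  proof (cases "T = 0")
    case True then show ?thesis using U_zero[OF assms(1)] by simp
  next
    case False
    let ?T = "(1 / norm T) *\<^sub>R T"
    have "?T \<in> Bop J" using Bop_scaleR assms(2) by blast
    moreover have "norm ?T \<le> 1" using False by simp
    ultimately have "norm (U ?T) \<in> ?S" by blast
    then have "norm (U ?T) \<le> opnorm_U J U" unfolding opnorm_U_def using bdd by (rule cSup_upper)
    then have "norm (U T) / norm T \<le> opnorm_U J U"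
      by (simp add: U_scaleR[OF assms])
    then show ?thesis using False by (simp add: field_simps)
  qed
qed

lemma opnorm_nonneg:
  assumes "bounded_clinear_U J Jy U" "T \<in> Bop J" "U T \<noteq> 0"
  shows "0 < opnorm_U J U"
proof -
  have "0 < norm (U T)" using assms by simp
  also have "\<dots> \<le> opnorm_U J U * norm T" by (rule U_bound[OF assms(1,2)])
  finally show ?thesis by (simp add: zero_less_mult_iff)
qed



section \<open>Riesz representation\<close>

lemma riesz:
  fixes \<phi> :: "'h::{real_inner,complete_space} \<Rightarrow> real"
  assumes bl: "bounded_linear \<phi>"
  shows "\<exists>u. \<forall>x. \<phi> x = inner x u"
proof (cases "\<forall>x. \<phi> x = 0")
  case True then show ?thesis by (intro exI[of _ 0]) simp
next
  case False
  interpret \<phi>: bounded_linear \<phi> by (rule bl)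
  obtain x1 where x1: "\<phi> x1 \<noteq> 0" using False by blast
  define M where "M = {x. \<phi> x = 1}"
  have x1M: "(1 / \<phi> x1) *\<^sub>R x1 \<in> M" using x1 by (simp add: M_def \<phi>.scaleR)
  define d where "d = Inf (norm ` M)"
  have bddb: "bdd_below (norm ` M)" by (rule bdd_belowI[of _ 0]) auto
  have d_le: "d \<le> norm y" if "y \<in> M" for y
    unfolding d_def using bddb that by (simp add: cInf_lower)
  have d_nonneg: "0 \<le> d" unfolding d_def using x1M by (intro cInf_greatest) auto
  have "\<exists>x\<in>M. norm x < d + 1 / real (Suc n)" for n
  proof -
    have "Inf (norm ` M) < d + 1 / real (Suc n)" unfolding d_def by simp
    then obtain y where "y \<in> norm ` M" "y < d + 1 / real (Suc n)"
      using cInf_lessD[of "norm ` M"] x1M by blast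
    then show ?thesis by blast
  qed
  then obtain X where XM: "\<And>n. X n \<in> M" and Xn: "\<And>n. norm (X n) < d + 1 / real (Suc n)"
    by metis
  define e where "e n = 1 / real (Suc n)" for n
  have e_pos: "0 < e n" "e n \<le> 1" for n unfolding e_def by (auto simp: field_simps)
  have para: "(norm (X n - X m))^2 \<le> (4 * d + 2) * (e n + e m)" for n m
  proof -
    have mid: "(1/2) *\<^sub>R (X n + X m) \<in> M" using XM[of n] XM[of m]
      by (simp add: M_def \<phi>.scaleR \<phi>.add)
    have "2 * d \<le> norm (X n + X m)" using d_le[OF mid] by simp
    then have "(2 * d)^2 \<le> (norm (X n + X m))^2"
      using d_nonneg by (intro power_mono) auto
    then have A: "4 * d^2 \<le> (norm (X n + X m))^2" by (simp add: power_mult_distrib)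
    have pl: "(norm (X n - X m))^2 + (norm (X n + X m))^2 = 2 * (norm (X n))^2 + 2 * (norm (X m))^2"
      unfolding power2_norm_eq_inner by (simp add: inner_diff inner_add inner_commute algebra_simps)
    have Bn: "(norm (X n))^2 \<le> (d + e n)^2"
      using Xn[of n] unfolding e_def by (intro power_mono) auto
    have Bm: "(norm (X m))^2 \<le> (d + e m)^2"
      using Xn[of m] unfolding e_def by (intro power_mono) auto
    have "(norm (X n - X m))^2 \<le> 2 * (d + e n)^2 + 2 * (d + e m)^2 - 4 * d^2"
      using pl A Bn Bm by linarith
    also have "\<dots> = 4 * d * (e n + e m) + 2 * (e n * e n) + 2 * (e m * e m)"
      by (simp add: power2_eq_square algebra_simps)
    also have "\<dots> \<le> 4 * d * (e n + e m) + 2 * e n + 2 * e m"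
      using e_pos[of n] e_pos[of m] d_nonneg
      by (intro add_mono mult_left_mono) (auto simp: mult_le_cancel_left1)
    also have "\<dots> = (4 * d + 2) * (e n + e m)" by (simp add: algebra_simps)
    finally show ?thesis .
  qed
  have "Cauchy X"
    unfolding Cauchy_def
  proof (intro allI impI)
    fix \<epsilon> :: real assume "\<epsilon> > 0"
    obtain N :: nat where N: "real N > 2 * (4 * d + 2) / \<epsilon>^2"
      using reals_Archimedean2 by blast
    have "\<forall>m\<ge>N. \<forall>n\<ge>N. dist (X m) (X n) < \<epsilon>"
    proof (intro allI impI)
      fix m n assume mn: "m \<ge> N" "n \<ge> N"
      have eN: "e k \<le> 1 / real (Suc N)" if "k \<ge> N" for k
        unfolding e_def using that by (intro divide_left_mono) auto
      have "(dist (X m) (X n))^2 \<le> (4 * d + 2) * (e m + e n)"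
        using para[of m n] by (simp add: dist_norm)
      also have "\<dots> \<le> (4 * d + 2) * (2 / real (Suc N))"
        using eN[OF mn(1)] eN[OF mn(2)] d_nonneg by (intro mult_left_mono) auto
      also have "\<dots> < \<epsilon>^2"
      proof -
        have "2 * (4 * d + 2) / \<epsilon>^2 < real (Suc N)" using N by simp
        then have "2 * (4 * d + 2) < real (Suc N) * \<epsilon>^2"
          using \<open>\<epsilon> > 0\<close> by (simp add: divide_less_eq)
        then show ?thesis by (simp add: field_simps)
      qed
      finally have "(dist (X m) (X n))^2 < \<epsilon>^2" .
      from power_less_imp_less_base[OF this] show "dist (X m) (X n) < \<epsilon>"
        using \<open>\<epsilon> > 0\<close> by linarith
    qed
    then show "\<exists>M. \<forall>m\<ge>M. \<forall>n\<ge>M. dist (X m) (X n) < \<epsilon>" by blast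
  qed
  from Cauchy_convergent[OF this] obtain u0 where lim: "X \<longlonglongrightarrow> u0"
    unfolding convergent_def by blast
  have "(\<lambda>n. \<phi> (X n)) \<longlonglongrightarrow> \<phi> u0" by (intro \<phi>.tendsto lim)
  moreover have "(\<lambda>n. \<phi> (X n)) = (\<lambda>n. 1)" using XM by (auto simp: M_def)
  ultimately have "(\<lambda>n. 1::real) \<longlonglongrightarrow> \<phi> u0" by simp
  then have u0M: "\<phi> u0 = 1" using LIMSEQ_unique[OF _ tendsto_const] by blast
  have u0min: "norm u0 \<le> d"
  proof -
    have "(\<lambda>n. norm (X n)) \<longlonglongrightarrow> norm u0" by (intro tendsto_norm lim)
    moreover have "(\<lambda>n. d + 1 / real (Suc n)) \<longlonglongrightarrow> d + 0"
      by (intro tendsto_add tendsto_const LIMSEQ_inverse_real_of_nat[unfolded inverse_eq_divide])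
    ultimately show ?thesis
      using Xn by (intro LIMSEQ_le[of "\<lambda>n. norm (X n)" _ "\<lambda>n. d + 1 / real (Suc n)"]) (auto intro: less_imp_le)
  qed
  have orth: "inner u0 h = 0" if "\<phi> h = 0" for h
  proof -
    define a where "a = inner u0 h"
    define H where "H = inner h h"
    have H0: "0 \<le> H" unfolding H_def by simp
    define s where "s = - a / (H + 1)"
    have "u0 + s *\<^sub>R h \<in> M" using u0M that by (simp add: M_def \<phi>.add \<phi>.scaleR)
    then have "norm u0 \<le> norm (u0 + s *\<^sub>R h)" using u0min d_le by fastforce
    then have "(norm u0)^2 \<le> (norm (u0 + s *\<^sub>R h))^2" by (intro power_mono) auto
    then have "inner u0 u0 \<le> inner u0 u0 + 2 * s * a + s * s * H"
      unfolding power2_norm_eq_inner a_def H_def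
      by (simp add: inner_add inner_commute algebra_simps)
    then have "0 \<le> 2 * s * a + s * s * H" by simp
    then have "0 \<le> (2 * s * a + s * s * H) * (H + 1)^2" using H0 by simp
    also have "(2 * s * a + s * s * H) * (H + 1)^2 = -(a^2) * (H + 2)"
    proof -
      have hp: "H + 1 \<noteq> 0" using H0 by linarith
      have "(2 * s * a + s * s * H) * (H + 1)^2 = 2 * (s * (H + 1)) * a * (H + 1) + (s * (H + 1)) * (s * (H + 1)) * H"
        by (simp add: power2_eq_square algebra_simps)
      also have "s * (H + 1) = - a" unfolding s_def using hp by simp
      finally show ?thesis by (simp add: power2_eq_square algebra_simps)
    qed
    finally have "a^2 * (H + 2) \<le> 0" by simp
    moreover have "0 \<le> a^2 * (H + 2)" using H0 by simp
    ultimately have "a^2 * (H + 2) = 0" by linarith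
    then show ?thesis using H0 unfolding a_def by simp
  qed
  have u0nz: "u0 \<noteq> 0" using u0M by auto
  define u where "u = (1 / inner u0 u0) *\<^sub>R u0"
  have "\<phi> x = inner x u" for x
  proof -
    have "\<phi> (x - \<phi> x *\<^sub>R u0) = 0" using u0M by (simp add: \<phi>.diff \<phi>.scaleR)
    then have "inner u0 (x - \<phi> x *\<^sub>R u0) = 0" by (rule orth)
    then have "inner u0 x = \<phi> x * inner u0 u0" by (simp add: inner_diff_right)
    then show ?thesis using u0nz unfolding u_def by (simp add: inner_commute)
  qed
  then show ?thesis by blast
qed

section \<open>Adjoints\<close>

lemma adjoint_exists:
  fixes T :: "'h::{real_inner,complete_space} \<Rightarrow>\<^sub>L 'h"
  shows "\<exists>S :: 'h \<Rightarrow>\<^sub>L 'h. \<forall>x y. inner (T x) y = inner x (S y)"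
proof -
  have "\<forall>y. \<exists>u. \<forall>x. inner (T x) y = inner x u"
  proof
    fix y
    have "bounded_linear (\<lambda>x. inner (T x) y)"
      by (intro bounded_linear_compose[OF bounded_linear_inner_left] blinfun.bounded_linear_right)
    then show "\<exists>u. \<forall>x. inner (T x) y = inner x u" by (rule riesz)
  qed
  then obtain S0 where S0: "\<And>x y. inner (T x) y = inner x (S0 y)" by metis
  have uniq: "u = v" if "\<And>x. inner x u = inner x v" for u v :: 'h
  proof -
    have "inner (u - v) (u - v) = 0" using that by (simp add: inner_diff)
    then show ?thesis by simp
  qed
  have add: "S0 (y1 + y2) = S0 y1 + S0 y2" for y1 y2
    by (rule uniq) (simp add: S0[symmetric] inner_add_right)
  have scl: "S0 (r *\<^sub>R y) = r *\<^sub>R S0 y" for r y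
    by (rule uniq) (simp add: S0[symmetric])
  have bnd: "norm (S0 y) \<le> norm y * norm T" for y
  proof -
    have "(norm (S0 y))^2 = inner (T (S0 y)) y" by (simp add: S0 power2_norm_eq_inner)
    also have "\<dots> \<le> norm (T (S0 y)) * norm y" by (rule order_trans[OF _ Cauchy_Schwarz_ineq2]) simp
    also have "\<dots> \<le> norm T * norm (S0 y) * norm y" by (intro mult_right_mono norm_blinfun) auto
    finally have "norm (S0 y) * norm (S0 y) \<le> (norm y * norm T) * norm (S0 y)"
      by (simp add: power2_eq_square algebra_simps)
    then show ?thesis
      by (cases "norm (S0 y) = 0") (auto simp: mult_le_cancel_right)
  qed
  have "bounded_linear S0"
    by (intro bounded_linear_intro[where K="norm T"] add scl bnd)
  then have "\<forall>x y. inner (T x) y = inner x (Blinfun S0 y)"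
    by (simp add: bounded_linear_Blinfun_apply S0)
  then show ?thesis by blast
qed

lemma hadj_eq:
  fixes T S :: "'h::{real_inner,complete_space} \<Rightarrow>\<^sub>L 'h"
  assumes "\<forall>x y. inner (T x) y = inner x (S y)"
  shows "hadj T = S"
  unfolding hadj_def
proof (rule the_equality)
  show "\<forall>x y. inner (T x) y = inner x (S y)" by fact
next
  fix S' :: "'h \<Rightarrow>\<^sub>L 'h" assume S': "\<forall>x y. inner (T x) y = inner x (S' y)"
  show "S' = S"
  proof (rule blinfun_eqI)
    fix y
    have "inner (S' y - S y) (S' y - S y) = 0"
      using S' assms by (simp add: inner_diff inner_commute[of "S' y - S y"])
    then show "S' y = S y" by simp
  qed
qed

lemma hadj_scaleR:
  fixes T :: "'h::{real_inner,complete_space} \<Rightarrow>\<^sub>L 'h"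
  shows "hadj (t *\<^sub>R T) = t *\<^sub>R hadj T"
proof -
  obtain S :: "'h \<Rightarrow>\<^sub>L 'h" where S: "\<forall>x y. inner (T x) y = inner x (S y)"
    using adjoint_exists by blast
  have "hadj T = S" by (rule hadj_eq[OF S])
  moreover have "hadj (t *\<^sub>R T) = t *\<^sub>R S"
    by (rule hadj_eq) (simp add: S scaleR_blinfun.rep_eq)
  ultimately show ?thesis by simp
qed

lemma hadj_zero[simp]: "hadj (0 :: 'h::{real_inner,complete_space} \<Rightarrow>\<^sub>L 'h) = 0"
  by (rule hadj_eq) simp



section \<open>Multinomial expansion\<close>

definition deg :: "('n::finite \<Rightarrow> nat) \<Rightarrow> nat" where "deg \<alpha> = (\<Sum>i\<in>UNIV. \<alpha> i)"
definition Ak :: "nat \<Rightarrow> ('n::finite \<Rightarrow> nat) set" where "Ak k = {\<alpha>. deg \<alpha> = k}"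
definition words :: "nat \<Rightarrow> (nat \<Rightarrow> 'n::finite) set" where "words k = PiE {..<k} (\<lambda>_. UNIV)"
definition cnt :: "nat \<Rightarrow> (nat \<Rightarrow> 'n::finite) \<Rightarrow> ('n \<Rightarrow> nat)" where
  "cnt k w = (\<lambda>i. card {j\<in>{..<k}. w j = i})"
definition mc :: "('n::finite \<Rightarrow> nat) \<Rightarrow> nat" where
  "mc \<alpha> = card {w \<in> words (deg \<alpha>). cnt (deg \<alpha>) w = \<alpha>}"

lemma finite_Ak: "finite (Ak k :: ('n::finite \<Rightarrow> nat) set)"
proof -
  have "Ak k \<subseteq> PiE (UNIV :: 'n set) (\<lambda>_. {..k})"
  proof
    fix \<alpha> :: "'n \<Rightarrow> nat" assume "\<alpha> \<in> Ak k"
    then have "\<alpha> i \<le> k" for i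
    proof -
      have "\<alpha> i \<le> sum \<alpha> UNIV" by (rule member_le_sum) auto
      then show ?thesis using \<open>\<alpha> \<in> Ak k\<close> unfolding Ak_def deg_def by simp
    qed
    then show "\<alpha> \<in> PiE UNIV (\<lambda>_. {..k})" by (simp add: PiE_UNIV_domain)
  qed
  moreover have "finite (PiE (UNIV :: 'n set) (\<lambda>_. {..k}))" by (intro finite_PiE) auto
  ultimately show ?thesis by (rule finite_subset)
qed

lemma finite_words: "finite (words k :: (nat \<Rightarrow> 'n::finite) set)"
  unfolding words_def by (intro finite_PiE) auto

lemma deg_cnt: "deg (cnt k w) = k"
proof -
  have "deg (cnt k w) = (\<Sum>i\<in>UNIV. \<Sum>j\<in>{j\<in>{..<k}. w j = i}. (1::nat))"
    unfolding deg_def cnt_def by simp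
  also have "\<dots> = (\<Sum>j\<in>{..<k}. (1::nat))"
    by (rule sum.group) auto
  finally show ?thesis by simp
qed

lemma multinomial:
  fixes x :: "'n::finite \<Rightarrow> 'a::comm_semiring_1"
  shows "(\<Sum>i\<in>UNIV. x i) ^ k = (\<Sum>\<alpha>\<in>Ak k. of_nat (mc \<alpha>) * (\<Prod>i\<in>UNIV. x i ^ \<alpha> i))"
proof -
  have "(\<Sum>i\<in>UNIV. x i) ^ k = (\<Prod>j\<in>{..<k}. \<Sum>i\<in>UNIV. x i)" by simp
  also have "\<dots> = (\<Sum>w\<in>words k. \<Prod>j\<in>{..<k}. x (w j))"
    unfolding words_def by (rule prod_sum_PiE) auto
  also have "\<dots> = (\<Sum>w\<in>words k. \<Prod>i\<in>UNIV. x i ^ cnt k w i)"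
  proof (rule sum.cong[OF refl])
    fix w :: "nat \<Rightarrow> 'n"
    have "(\<Prod>j\<in>{..<k}. x (w j)) = (\<Prod>i\<in>UNIV. \<Prod>j\<in>{j\<in>{..<k}. w j = i}. x (w j))"
      by (rule sum.group[symmetric, where 'a='a] prod.group[symmetric]) auto
    also have "\<dots> = (\<Prod>i\<in>UNIV. x i ^ cnt k w i)"
      unfolding cnt_def by (intro prod.cong refl) simp
    finally show "(\<Prod>j\<in>{..<k}. x (w j)) = (\<Prod>i\<in>UNIV. x i ^ cnt k w i)" .
  qed
  also have "\<dots> = (\<Sum>\<alpha>\<in>Ak k. \<Sum>w\<in>{w\<in>words k. cnt k w = \<alpha>}. \<Prod>i\<in>UNIV. x i ^ cnt k w i)"
    by (rule sum.group[symmetric]) (use finite_Ak[of k] in \<open>auto simp: finite_words Ak_def deg_cnt\<close>)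
  also have "\<dots> = (\<Sum>\<alpha>\<in>Ak k. of_nat (mc \<alpha>) * (\<Prod>i\<in>UNIV. x i ^ \<alpha> i))"
  proof (rule sum.cong[OF refl])
    fix \<alpha> :: "'n \<Rightarrow> nat" assume "\<alpha> \<in> Ak k"
    then have dk: "deg \<alpha> = k" by (simp add: Ak_def)
    have "(\<Sum>w\<in>{w\<in>words k. cnt k w = \<alpha>}. \<Prod>i\<in>UNIV. x i ^ cnt k w i)
        = (\<Sum>w\<in>{w\<in>words k. cnt k w = \<alpha>}. \<Prod>i\<in>UNIV. x i ^ \<alpha> i)"
      by (rule sum.cong) auto
    also have "\<dots> = of_nat (mc \<alpha>) * (\<Prod>i\<in>UNIV. x i ^ \<alpha> i)"
      by (simp add: mc_def dk)
    finally show "(\<Sum>w\<in>{w\<in>words k. cnt k w = \<alpha>}. \<Prod>i\<in>UNIV. x i ^ cnt k w i)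
        = of_nat (mc \<alpha>) * (\<Prod>i\<in>UNIV. x i ^ \<alpha> i)" .
  qed
  finally show ?thesis .
qed



lemma finite_deg_less: "finite {\<alpha> :: 'n::finite \<Rightarrow> nat. deg \<alpha> < K}"
proof -
  have "{\<alpha> :: 'n \<Rightarrow> nat. deg \<alpha> < K} = (\<Union>k\<in>{..<K}. Ak k)" by (auto simp: Ak_def)
  then show ?thesis by (auto intro!: finite_UN_I finite_Ak)
qed

lemma sum_deg_less:
  "sum F {\<alpha> :: 'n::finite \<Rightarrow> nat. deg \<alpha> < K} = (\<Sum>k<K. sum F (Ak k))"
proof -
  have "(\<Sum>k\<in>{..<K}. sum F {x\<in>{\<alpha> :: 'n \<Rightarrow> nat. deg \<alpha> < K}. deg x = k}) = sum F {\<alpha>. deg \<alpha> < K}"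
    by (rule sum.group) (auto simp: finite_deg_less)
  moreover have "{x\<in>{\<alpha> :: 'n \<Rightarrow> nat. deg \<alpha> < K}. deg x = k} = Ak k" if "k < K" for k
    using that by (auto simp: Ak_def)
  ultimately show ?thesis by simp
qed

lemma sum_over_degs_le:
  fixes F :: "('n::finite \<Rightarrow> nat) \<Rightarrow> real"
  assumes "finite Y" "\<And>\<alpha>. 0 \<le> F \<alpha>"
  shows "sum F Y \<le> (\<Sum>k\<in>deg ` Y. sum F (Ak k))"
proof -
  have "sum F Y = (\<Sum>k\<in>deg ` Y. sum F {x\<in>Y. deg x = k})"
    by (rule sum.group[symmetric]) (use assms in auto)
  also have "\<dots> \<le> (\<Sum>k\<in>deg ` Y. sum F (Ak k))"
    by (intro sum_mono sum_mono2 finite_Ak) (auto simp: Ak_def assms)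
  finally show ?thesis .
qed

lemma has_sum_regroup:
  fixes F :: "('n::finite \<Rightarrow> nat) \<Rightarrow> 'v::real_normed_vector"
  assumes G: "\<And>k. (\<Sum>\<alpha>\<in>Ak k. norm (F \<alpha>)) \<le> G k" and sG: "summable G"
    and H: "\<And>k. (\<Sum>\<alpha>\<in>Ak k. F \<alpha>) = Hs k" and sH: "Hs sums L"
  shows "(F has_sum L) UNIV"
  unfolding has_sum_def tendsto_iff
proof (intro allI impI)
  fix \<epsilon> :: real assume "\<epsilon> > 0"
  have G0: "0 \<le> G k" for k by (rule order_trans[OF _ G]) (simp add: sum_nonneg)
  obtain K0 where K0: "\<And>n. n \<ge> K0 \<Longrightarrow> norm (\<Sum>i. G (i + n)) < \<epsilon> / 2"
    using suminf_exist_split[OF _ sG, of "\<epsilon>/2"] \<open>\<epsilon> > 0\<close> by auto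
  obtain K1 where K1: "\<And>n. n \<ge> K1 \<Longrightarrow> norm ((\<Sum>k<n. Hs k) - L) < \<epsilon> / 2"
    using sH \<open>\<epsilon> > 0\<close> unfolding sums_def LIMSEQ_iff by (meson half_gt_zero)
  define K where "K = max K0 K1"
  define E where "E = {\<alpha> :: 'n \<Rightarrow> nat. deg \<alpha> < K}"
  have fE: "finite E" unfolding E_def by (rule finite_deg_less)
  show "\<forall>\<^sub>F S in finite_subsets_at_top UNIV. dist (sum F S) L < \<epsilon>"
    unfolding eventually_finite_subsets_at_top
  proof (intro exI conjI allI impI)
    show "finite E" "E \<subseteq> UNIV" by (auto simp: fE)
    fix Y assume Y: "finite Y \<and> E \<subseteq> Y \<and> Y \<subseteq> UNIV"
    have split: "sum F Y = sum F E + sum F (Y - E)"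
      using Y fE by (metis add.commute sum.subset_diff)
    have SE: "sum F E = (\<Sum>k<K. Hs k)" unfolding E_def sum_deg_less H ..
    have "norm (sum F (Y - E)) \<le> sum (\<lambda>\<alpha>. norm (F \<alpha>)) (Y - E)" by (rule norm_sum)
    also have "\<dots> \<le> (\<Sum>k\<in>deg ` (Y - E). \<Sum>\<alpha>\<in>Ak k. norm (F \<alpha>))"
      by (rule sum_over_degs_le) (use Y in auto)
    also have "\<dots> \<le> (\<Sum>k\<in>deg ` (Y - E). G k)" by (intro sum_mono G)
    also have "\<dots> = (\<Sum>i\<in>(\<lambda>k. k - K) ` deg ` (Y - E). G (i + K))"
    proof -
      have ge: "\<And>k. k \<in> deg ` (Y - E) \<Longrightarrow> k \<ge> K" by (auto simp: E_def)
      then have inj: "inj_on (\<lambda>k. k - K) (deg ` (Y - E))" unfolding inj_on_def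
        by (metis le_add_diff_inverse)
      have "(\<Sum>i\<in>(\<lambda>k. k - K) ` deg ` (Y - E). G (i + K)) = (\<Sum>k\<in>deg ` (Y - E). G (k - K + K))"
        by (subst sum.reindex[OF inj]) simp
      also have "\<dots> = (\<Sum>k\<in>deg ` (Y - E). G k)"
        by (intro sum.cong refl) (simp add: ge)
      finally show ?thesis by simp
    qed
    also have "\<dots> \<le> (\<Sum>i. G (i + K))"
      by (intro sum_le_suminf summable_ignore_initial_segment sG) (use Y G0 in auto)
    also have "\<dots> < \<epsilon> / 2" using K0[of K] by (simp add: K_def)
    finally have t1: "norm (sum F (Y - E)) < \<epsilon> / 2" .
    have t2: "norm ((\<Sum>k<K. Hs k) - L) < \<epsilon> / 2" using K1[of K] by (simp add: K_def)
    have "dist (sum F Y) L = norm (((\<Sum>k<K. Hs k) - L) + sum F (Y - E))"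
      by (simp add: dist_norm split SE algebra_simps)
    also have "\<dots> \<le> norm ((\<Sum>k<K. Hs k) - L) + norm (sum F (Y - E))" by (rule norm_triangle_ineq)
    also have "\<dots> < \<epsilon>" using t1 t2 by simp
    finally show "dist (sum F Y) L < \<epsilon>" .
  qed
qed

lemma nnsum_le_iff:
  assumes "\<And>x. 0 \<le> t x"
  shows "nnsum_le t B \<longleftrightarrow> (\<forall>F. finite F \<longrightarrow> sum t F \<le> B)"
proof
  assume "nnsum_le t B"
  then have s: "t summable_on UNIV" and b: "infsum t UNIV \<le> B" unfolding nnsum_le_def by auto
  show "\<forall>F. finite F \<longrightarrow> sum t F \<le> B"
  proof (intro allI impI)
    fix F :: "'a set" assume "finite F"
    have "sum t F \<le> infsum t UNIV" by (rule finite_sum_le_infsum[OF s \<open>finite F\<close>]) (use assms in auto)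
    then show "sum t F \<le> B" using b by simp
  qed
next
  assume h: "\<forall>F. finite F \<longrightarrow> sum t F \<le> B"
  have s: "t summable_on UNIV"
    by (rule nonneg_bdd_above_summable_on) (use assms h in \<open>auto intro!: bdd_aboveI[of _ B]\<close>)
  have "infsum t UNIV \<le> B" by (rule infsum_le_finite_sums[OF s]) (use h in auto)
  then show "nnsum_le t B" using s unfolding nnsum_le_def by simp
qed



lemma powr_power_nat: "0 \<le> x \<Longrightarrow> (x ^ k) powr p = (x powr p) ^ k"
  for x p :: real
  by (induction k) (auto simp: powr_mult)

lemma convex_powr_nonneg: "1 \<le> p \<Longrightarrow> convex_on {0..} (\<lambda>x::real. x powr p)"
proof (rule convex_onI)
  fix t x y :: real assume p: "1 \<le> p" and t: "0 < t" "t < 1" and xy: "x \<in> {0..}" "y \<in> {0..}"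
  have tp: "s powr p \<le> s" if "0 \<le> s" "s \<le> 1" for s :: real
    using powr_mono'[of 1 p s] that p by simp
  consider "x = 0" | "y = 0" | "x > 0" "y > 0" using xy by force
  then show "((1 - t) *\<^sub>R x + t *\<^sub>R y) powr p \<le> (1 - t) * x powr p + t * y powr p"
  proof cases
    case 1
    have "(t * y) powr p = t powr p * y powr p" using t xy by (simp add: powr_mult)
    also have "\<dots> \<le> t * y powr p" using tp[of t] t by (intro mult_right_mono) auto
    finally show ?thesis using 1 by simp
  next
    case 2
    have "((1 - t) * x) powr p = (1 - t) powr p * x powr p" using t xy by (simp add: powr_mult)
    also have "\<dots> \<le> (1 - t) * x powr p" using tp[of "1 - t"] t by (intro mult_right_mono) auto
    finally show ?thesis using 2 by simp
  next
    case 3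
    show ?thesis using convex_onD[OF powr_convex[OF p], of t x y] t 3 by simp
  qed
qed (simp add: convex_real_interval)

lemma power_mean:
  fixes r :: "'n::finite \<Rightarrow> real"
  assumes r: "\<And>i. 0 \<le> r i" and p: "1 \<le> p"
  shows "real CARD('n) * ((\<Sum>i\<in>UNIV. r i) / real CARD('n)) powr p \<le> (\<Sum>i\<in>UNIV. r i powr p)"
proof -
  let ?n = "real CARD('n)"
  have n0: "?n > 0" by simp
  have "(\<Sum>i\<in>UNIV. (1 / ?n) *\<^sub>R r i) powr p \<le> (\<Sum>i\<in>UNIV. (1 / ?n) * r i powr p)"
    by (rule convex_on_sum[OF _ _ convex_powr_nonneg[OF p], of UNIV "\<lambda>_. 1 / ?n" r])
       (use r in auto)
  also have "(\<Sum>i\<in>UNIV. (1 / ?n) *\<^sub>R r i) = (\<Sum>i\<in>UNIV. r i) / ?n"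
    by (simp add: sum_divide_distrib)
  also have "(\<Sum>i\<in>UNIV. (1 / ?n) * r i powr p) = (\<Sum>i\<in>UNIV. r i powr p) / ?n"
    by (simp add: sum_divide_distrib)
  finally show ?thesis using n0 by (simp add: field_simps)
qed

lemma N_zero: fixes N :: "complex ^ 'n::finite \<Rightarrow> real" assumes "is_cnorm N" shows "N 0 = 0"
proof -
  have "N ((0::complex) *s 0) = cmod 0 * N 0" using assms unfolding is_cnorm_def by blast
  then show ?thesis by simp
qed

lemma N_nonneg: fixes N :: "complex ^ 'n::finite \<Rightarrow> real" assumes "is_cnorm N" shows "0 \<le> N x"
proof -
  have "N ((-1) *s x) = cmod (-1) * N x" using assms unfolding is_cnorm_def by blast
  then have 1: "N ((-1) *s x) = N x" by simp
  have 2: "N (x + (-1) *s x) \<le> N x + N ((-1) *s x)" using assms unfolding is_cnorm_def by blast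
  have 3: "x + (-1) *s x = 0" by (simp add: vec_eq_iff)
  show ?thesis using 1 2 3 N_zero[OF assms] by simp
qed

lemma N_coord: fixes N :: "complex ^ 'n::finite \<Rightarrow> real" assumes "is_cnorm N" "normalized_1_unconditional N"
  shows "cmod (z $ i) \<le> N z"
proof -
  have "N (\<chi> j. (axis i 1 :: complex ^ 'n) $ j * z $ j) \<le> N z"
  proof -
    have th: "\<forall>j. cmod ((axis i 1 :: complex ^ 'n) $ j) \<le> 1" by (simp add: axis_def)
    then show ?thesis using assms(2) unfolding normalized_1_unconditional_def by blast
  qed
  moreover have "(\<chi> j. (axis i 1 :: complex ^ 'n) $ j * z $ j) = (z $ i) *s axis i 1"
    by (simp add: vec_eq_iff axis_def)
  moreover have "N ((z $ i) *s axis i 1) = cmod (z $ i)"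
    using assms unfolding is_cnorm_def normalized_1_unconditional_def by simp
  ultimately show ?thesis by simp
qed

lemma l1_le_N:
  fixes N :: "complex ^ 'n::finite \<Rightarrow> real"
  assumes "is_cnorm N" "normalized_1_unconditional N"
  shows "(\<Sum>i\<in>UNIV. cmod (z $ i)) \<le> id_to_l1_norm N * N z"
proof -
  let ?L = "{(\<Sum>i\<in>UNIV. cmod (z $ i)) | z :: complex ^ 'n. N z \<le> 1}"
  have bdd: "bdd_above ?L"
  proof (rule bdd_aboveI[of _ "real CARD('n)"])
    fix x assume "x \<in> ?L"
    then obtain z :: "complex ^ 'n" where z: "x = (\<Sum>i\<in>UNIV. cmod (z $ i))" "N z \<le> 1" by blast
    have "(\<Sum>i\<in>UNIV. cmod (z $ i)) \<le> (\<Sum>i\<in>(UNIV::'n set). 1)"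
    proof (intro sum_mono)
      fix i show "cmod (z $ i) \<le> 1" using N_coord[OF assms, of z i] z by linarith
    qed
    then show "x \<le> real CARD('n)" using z by simp
  qed
  show ?thesis
  proof (cases "z = 0")
    case True then show ?thesis using N_zero[OF assms(1)] by simp
  next
    case False
    have "N z \<noteq> 0" using False assms(1) unfolding is_cnorm_def by blast
    then have Np: "N z > 0" using N_nonneg[OF assms(1), of z] by linarith
    define z' where "z' = complex_of_real (1 / N z) *s z"
    have "N z' = cmod (complex_of_real (1 / N z)) * N z"
      unfolding z'_def using assms(1) unfolding is_cnorm_def by blast
    also have "\<dots> = 1" using Np by (simp add: norm_divide)
    finally have "N z' = 1" .
    then have "(\<Sum>i\<in>UNIV. cmod (z' $ i)) \<in> ?L" by force
    then have "(\<Sum>i\<in>UNIV. cmod (z' $ i)) \<le> id_to_l1_norm N"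
      unfolding id_to_l1_norm_def using bdd by (rule cSup_upper)
    moreover have "(\<Sum>i\<in>UNIV. cmod (z' $ i)) = (\<Sum>i\<in>UNIV. cmod (z $ i)) / N z"
      unfolding z'_def using Np by (simp add: norm_mult norm_divide sum_divide_distrib)
    ultimately show ?thesis using Np by (simp add: field_simps)
  qed
qed

lemma l1_norm_ge1:
  fixes N :: "complex ^ 'n::finite \<Rightarrow> real"
  assumes "is_cnorm N" "normalized_1_unconditional N"
  shows "1 \<le> id_to_l1_norm N"
proof -
  obtain i :: 'n where True by blast
  have "(\<Sum>j\<in>UNIV. cmod ((axis i 1 :: complex ^ 'n) $ j)) \<le> id_to_l1_norm N * N (axis i 1)"
    by (rule l1_le_N[OF assms])
  moreover have "N (axis i 1) = 1" using assms(2) unfolding normalized_1_unconditional_def by blast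
  moreover have "(\<Sum>j\<in>UNIV. cmod ((axis i 1 :: complex ^ 'n) $ j)) = 1"
    by (simp add: axis_def if_distrib[of cmod] sum.delta cong: if_cong)
  ultimately show ?thesis by simp
qed



definition Rcond ::
  "('h::{real_inner,complete_space} \<Rightarrow>\<^sub>L 'h) \<Rightarrow> (('h \<Rightarrow>\<^sub>L 'h) \<Rightarrow> 'y::banach) \<Rightarrow> real \<Rightarrow>
   (complex ^ 'k::finite) set \<Rightarrow> real \<Rightarrow> real \<Rightarrow> bool" where
  "Rcond J U lam \<Omega> p r \<longleftrightarrow>
     (\<forall>f a b. ph_rep J \<Omega> f a b \<and> bounded (f ` \<Omega>) \<longrightarrow>
        (\<forall>z\<in>(\<lambda>w. r *\<^sub>R w) ` \<Omega>.
           nnsum_le (\<lambda>\<alpha>. (norm (U (a \<alpha>)) powr p + norm (U (b \<alpha>)) powr p) * cmod (monom z \<alpha>) powr p)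
                    (lam powr p * supnorm \<Omega> f powr p)))"

definition APcond ::
  "('h::{real_inner,complete_space} \<Rightarrow>\<^sub>L 'h) \<Rightarrow> (('h \<Rightarrow>\<^sub>L 'h) \<Rightarrow> 'y::banach) \<Rightarrow> real \<Rightarrow>
   (complex ^ 'k::finite) set \<Rightarrow> real \<Rightarrow> real ^ 'k \<Rightarrow> bool" where
  "APcond J U lam \<Omega> p r \<longleftrightarrow>
     (\<forall>f a b. ph_rep J \<Omega> f a b \<and> bounded (f ` \<Omega>) \<longrightarrow>
        nnsum_le (\<lambda>\<alpha>. (norm (U (a \<alpha>)) powr p + norm (U (b \<alpha>)) powr p) * rmonom r \<alpha> powr p)
                 (lam powr p * supnorm \<Omega> f powr p))"

lemma Rlam_eq: "Rlam J U lam \<Omega> p = Sup {r. r \<ge> 0 \<and> Rcond J U lam \<Omega> p r}"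
  unfolding Rlam_def Rcond_def ..

lemma APlam_eq: "APlam J U lam \<Omega> p =
   Sup {(\<Sum>i\<in>UNIV. r $ i) / real CARD('k) | r :: real ^ 'k::finite. (\<forall>i. r $ i \<ge> 0) \<and> APcond J U lam \<Omega> p r}"
  unfolding APlam_def APcond_def ..

definition v1 :: "complex \<Rightarrow> complex ^ 1" where "v1 w = (\<chi> i. w)"

lemma v1_nth[simp]: "v1 w $ i = w" unfolding v1_def by simp

lemma v1_in_disc: "cmod w < 1 \<Longrightarrow> v1 w \<in> unit_disc1" unfolding unit_disc1_def by simp

lemma monom_1: "monom (z :: complex ^ 1) \<beta> = (z $ 1) ^ (\<beta> 1)"
  unfolding monom_def UNIV_1 by simp

lemma monom_zero_vec: "monom 0 \<alpha> = (if \<alpha> = (\<lambda>_. 0) then 1 else 0)"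
proof (cases "\<alpha> = (\<lambda>_. 0)")
  case True then show ?thesis unfolding monom_def by simp
next
  case False
  then obtain i where "\<alpha> i \<noteq> 0" by auto
  then have "monom 0 \<alpha> = 0" unfolding monom_def by (subst prod_zero_iff) auto
  then show ?thesis using False by simp
qed

lemma rmonom_zero_vec: "rmonom 0 \<alpha> = (if \<alpha> = (\<lambda>_. 0) then 1 else 0)"
proof (cases "\<alpha> = (\<lambda>_. 0)")
  case True then show ?thesis unfolding rmonom_def by simp
next
  case False
  then obtain i where "\<alpha> i \<noteq> 0" by auto
  then have "rmonom 0 \<alpha> = 0" unfolding rmonom_def by (subst prod_zero_iff) auto
  then show ?thesis using False by simp
qed

lemma monom_unit: "monom z (\<lambda>j. if j = i then 1 else 0) = z $ i"
  unfolding monom_def by (simp add: if_distrib[of "\<lambda>n. _ ^ n"] prod.delta cong: if_cong)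

lemma rmonom_unit: "rmonom r (\<lambda>j. if j = i then 1 else 0) = r $ i"
  unfolding rmonom_def by (simp add: if_distrib[of "\<lambda>n. _ ^ n"] prod.delta cong: if_cong)

lemma has_sum_single_pt:
  fixes f :: "'a \<Rightarrow> 'b::{comm_monoid_add,topological_space}"
  assumes "\<And>x. x \<noteq> e \<Longrightarrow> f x = 0" "s = f e"
  shows "(f has_sum s) UNIV"
proof -
  have "(f has_sum f e) {e}" by (rule has_sum_finiteI) auto
  then show ?thesis unfolding assms(2) by (subst has_sum_cong_neutral[of "{e}" UNIV f f]) (use assms in auto)
qed

lemma nnsum_single:
  assumes "\<And>x. 0 \<le> t x" "\<And>x. x \<noteq> e \<Longrightarrow> t x = 0"
  shows "nnsum_le t B \<longleftrightarrow> t e \<le> B"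
proof -
  have "sum t F = (if e \<in> F then t e else 0)" if "finite F" for F
  proof -
    have "sum t F = (\<Sum>x\<in>F. if x = e then t e else 0)" by (intro sum.cong) (use assms in auto)
    then show ?thesis using that by (simp add: sum.delta)
  qed
  then have "(\<forall>F. finite F \<longrightarrow> sum t F \<le> B) \<longleftrightarrow> t e \<le> B"
  proof (intro iffI allI impI)
    assume "\<forall>F. finite F \<longrightarrow> sum t F \<le> B"
    then have "sum t {e} \<le> B" by blast
    then show "t e \<le> B" by simp
  next
    fix F :: "'a set" assume "t e \<le> B" "finite F"
    then show "sum t F \<le> B" using \<open>finite F \<Longrightarrow> sum t F = _\<close> assms(1)[of e] by auto
  qed
  then show ?thesis using nnsum_le_iff[of t B] assms(1) by simp
qed

lemma ph_rep_at0:
  assumes "ph_rep J \<Omega> f a b" "0 \<in> \<Omega>"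
  shows "f 0 = a (\<lambda>_. 0)"
proof -
  have "((\<lambda>\<alpha>. cscale J (monom 0 \<alpha>) (a \<alpha>)) has_sum cscale J (monom 0 (\<lambda>_. 0)) (a (\<lambda>_. 0))) UNIV"
    by (rule has_sum_single_pt[where e="\<lambda>_. 0"]) (simp_all add: monom_zero_vec)
  then have 1: "(\<Sum>\<^sub>\<infinity>\<alpha>. cscale J (monom 0 \<alpha>) (a \<alpha>)) = a (\<lambda>_. 0)"
    by (simp add: infsumI monom_zero_vec)
  have "(\<lambda>\<alpha>. cscale J (cnj (monom 0 \<alpha>)) (hadj (b \<alpha>))) = (\<lambda>_. 0)"
    using assms(1) unfolding ph_rep_def by (auto simp: monom_zero_vec)
  then have 2: "(\<Sum>\<^sub>\<infinity>\<alpha>. cscale J (cnj (monom 0 \<alpha>)) (hadj (b \<alpha>))) = 0" by simp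
  show ?thesis using assms 1 2 unfolding ph_rep_def by auto
qed

lemma supnorm_ge:
  assumes "bounded (f ` \<Omega>)" "z \<in> \<Omega>"
  shows "norm (f z) \<le> supnorm \<Omega> f"
proof -
  have "bdd_above ((\<lambda>z. norm (f z)) ` \<Omega>)"
    using assms(1) by (metis bdd_above_norm image_image)
  then show ?thesis unfolding supnorm_def using assms(2) by (rule cSUP_upper2) simp
qed

lemma supnorm_nonneg:
  assumes "bounded (f ` \<Omega>)" "z \<in> \<Omega>"
  shows "0 \<le> supnorm \<Omega> f"
  using supnorm_ge[OF assms] norm_ge_zero order_trans by blast

lemma coef0_bound:
  assumes U: "bounded_clinear_U J Jy U" and lam: "opnorm_U J U < lam" and op0: "0 \<le> opnorm_U J U"
    and f: "ph_rep J \<Omega> f a b" "bounded (f ` \<Omega>)" and z0: "0 \<in> \<Omega>"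
  shows "norm (U (a (\<lambda>_. 0))) \<le> lam * supnorm \<Omega> f"
proof -
  have aB: "a (\<lambda>_. 0) \<in> Bop J" using f unfolding ph_rep_def by blast
  have "norm (U (a (\<lambda>_. 0))) \<le> opnorm_U J U * norm (a (\<lambda>_. 0))" by (rule U_bound[OF U aB])
  also have "\<dots> \<le> lam * norm (f 0)" using ph_rep_at0[OF f(1) z0] lam op0
    by (intro mult_mono) auto
  also have "\<dots> \<le> lam * supnorm \<Omega> f" using supnorm_ge[OF f(2) z0] lam op0 by (intro mult_left_mono) auto
  finally show ?thesis .
qed

lemma powr_bound_mult:
  fixes x y B :: real assumes "0 \<le> x" "x \<le> y * B" "0 \<le> y" "0 < p"
  shows "x powr p \<le> y powr p * B powr p"
proof -
  have "0 \<le> B \<or> y = 0"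
  proof (cases "y = 0")
    case False
    then have "0 < y" using assms by linarith
    moreover have "0 \<le> y * B" using assms by linarith
    ultimately show ?thesis by (simp add: zero_le_mult_iff)
  qed simp
  then show ?thesis
  proof
    assume "0 \<le> B"
    have "x powr p \<le> (y * B) powr p" by (rule powr_mono2) (use assms in auto)
    also have "\<dots> = y powr p * B powr p" using \<open>0 \<le> B\<close> assms by (simp add: powr_mult)
    finally show ?thesis .
  qed (use assms in auto)
qed

lemma Rcond_zero:
  assumes U: "bounded_clinear_U J Jy U" and lam: "opnorm_U J U < lam" and op0: "0 \<le> opnorm_U J U"
    and p: "1 \<le> p" and z0: "0 \<in> \<Omega>"
  shows "Rcond J U lam \<Omega> p 0"
  unfolding Rcond_def
proof (intro allI impI ballI)
  fix f a b z assume fab: "ph_rep J \<Omega> f a b \<and> bounded (f ` \<Omega>)" and z: "z \<in> (\<lambda>w. 0 *\<^sub>R w) ` \<Omega>"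
  then have z0': "z = 0" by auto
  have b0: "b (\<lambda>_. 0) = 0" using fab unfolding ph_rep_def by blast
  show "nnsum_le (\<lambda>\<alpha>. (norm (U (a \<alpha>)) powr p + norm (U (b \<alpha>)) powr p) * cmod (monom z \<alpha>) powr p)
                    (lam powr p * supnorm \<Omega> f powr p)"
  proof (subst nnsum_single[where e="\<lambda>_. 0"])
    show "(norm (U (a (\<lambda>_. 0))) powr p + norm (U (b (\<lambda>_. 0))) powr p) * cmod (monom z (\<lambda>_. 0)) powr p
        \<le> lam powr p * supnorm \<Omega> f powr p"
      using powr_bound_mult[OF _ coef0_bound[OF U lam op0 conjunct1[OF fab] conjunct2[OF fab] z0]] lam op0 p
      by (simp add: z0' monom_zero_vec b0 U_zero[OF U])
  qed (auto simp: z0' monom_zero_vec)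
qed

lemma APcond_zero:
  assumes U: "bounded_clinear_U J Jy U" and lam: "opnorm_U J U < lam" and op0: "0 \<le> opnorm_U J U"
    and p: "1 \<le> p" and z0: "0 \<in> \<Omega>"
  shows "APcond J U lam \<Omega> p 0"
  unfolding APcond_def
proof (intro allI impI)
  fix f a b assume fab: "ph_rep J \<Omega> f a b \<and> bounded (f ` \<Omega>)"
  have b0: "b (\<lambda>_. 0) = 0" using fab unfolding ph_rep_def by blast
  show "nnsum_le (\<lambda>\<alpha>. (norm (U (a \<alpha>)) powr p + norm (U (b \<alpha>)) powr p) * rmonom 0 \<alpha> powr p)
                    (lam powr p * supnorm \<Omega> f powr p)"
  proof (subst nnsum_single[where e="\<lambda>_. 0"])
    show "(norm (U (a (\<lambda>_. 0))) powr p + norm (U (b (\<lambda>_. 0))) powr p) * rmonom 0 (\<lambda>_. 0) powr p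
        \<le> lam powr p * supnorm \<Omega> f powr p"
      using powr_bound_mult[OF _ coef0_bound[OF U lam op0 conjunct1[OF fab] conjunct2[OF fab] z0]] lam op0 p
      by (simp add: rmonom_zero_vec b0 U_zero[OF U])
  qed (auto simp: rmonom_zero_vec)
qed



lemma test_ph_rep:
  assumes "T \<in> Bop J"
  shows "ph_rep J \<Omega> (\<lambda>z. cscale J (monom z e) T) (\<lambda>\<alpha>. if \<alpha> = e then T else 0) (\<lambda>_. 0)"
  unfolding ph_rep_def
proof (intro conjI allI ballI)
  fix z
  have hs: "((\<lambda>\<alpha>. cscale J (monom z \<alpha>) (if \<alpha> = e then T else 0)) has_sum cscale J (monom z e) T) UNIV"
    by (rule has_sum_single_pt[where e=e]) auto
  then show "(\<lambda>\<alpha>. cscale J (monom z \<alpha>) (if \<alpha> = e then T else 0)) summable_on UNIV"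
    unfolding summable_on_def by blast
  show "(\<lambda>\<alpha>. cscale J (cnj (monom z \<alpha>)) (hadj 0)) summable_on UNIV" by simp
  show "cscale J (monom z e) T = (\<Sum>\<^sub>\<infinity>\<alpha>. cscale J (monom z \<alpha>) (if \<alpha> = e then T else 0))
      + (\<Sum>\<^sub>\<infinity>\<alpha>. cscale J (cnj (monom z \<alpha>)) (hadj 0))"
    using infsumI[OF hs] by simp
qed (use assms in auto)

lemma test_bounded:
  assumes hJ: "hilbert_cstruct J" and ne: "\<Omega> \<noteq> {}" and le1: "\<And>z. z \<in> \<Omega> \<Longrightarrow> cmod (monom z e) \<le> 1"
  shows "bounded ((\<lambda>z. cscale J (monom z e) T) ` \<Omega>)"
    and "supnorm \<Omega> (\<lambda>z. cscale J (monom z e) T) \<le> norm T"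
proof -
  have nb: "norm (cscale J (monom z e) T) \<le> norm T" if "z \<in> \<Omega>" for z
    using le1[OF that] by (simp add: norm_cscale[OF hJ] mult_left_le_one_le)
  then show "bounded ((\<lambda>z. cscale J (monom z e) T) ` \<Omega>)"
    unfolding bounded_iff by blast
  show "supnorm \<Omega> (\<lambda>z. cscale J (monom z e) T) \<le> norm T"
    unfolding supnorm_def using ne nb by (intro cSUP_least) auto
qed

lemma test_nnsum:
  assumes U: "bounded_clinear_U J Jy U" and X: "\<And>\<alpha>. 0 \<le> X \<alpha>"
    and nn: "nnsum_le (\<lambda>\<alpha>. (norm (U (if \<alpha> = e then T else 0)) powr p + norm (U 0) powr p) * X \<alpha>) B"
  shows "norm (U T) powr p * X e \<le> B"
proof -
  have "\<forall>F. finite F \<longrightarrow> (\<Sum>\<alpha>\<in>F. (norm (U (if \<alpha> = e then T else 0)) powr p + norm (U 0) powr p) * X \<alpha>) \<le> B"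
    using nn by (subst (asm) nnsum_le_iff) (auto intro!: mult_nonneg_nonneg X)
  then have "(\<Sum>\<alpha>\<in>{e}. (norm (U (if \<alpha> = e then T else 0)) powr p + norm (U 0) powr p) * X \<alpha>) \<le> B"
    by blast
  then show ?thesis by (simp add: U_zero[OF U])
qed

lemma powr_cancel_bound:
  fixes x u L B p :: real
  assumes "0 \<le> x" "0 < u" "0 < p" "0 \<le> L" "0 \<le> B"
    and h: "u powr p * x powr p \<le> L powr p * B powr p"
  shows "x \<le> L * B / u"
proof -
  have "(u * x) powr p \<le> (L * B) powr p" using h assms by (simp add: powr_mult)
  then have "u * x \<le> L * B"
    using powr_less_mono2[of p "L * B" "u * x"] assms by (metis linorder_not_le mult_nonneg_nonneg not_less)
  then show ?thesis using assms by (simp add: field_simps)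
qed

lemma R_bdd:
  assumes hJ: "hilbert_cstruct J" and U: "bounded_clinear_U J Jy U" and T: "T \<in> Bop J" "U T \<noteq> 0"
    and p: "1 \<le> p" and lam: "0 \<le> lam"
    and r: "0 \<le> r" "Rcond J U lam unit_disc1 p r"
  shows "r \<le> lam * norm T / norm (U T)"
proof (rule ccontr)
  define Bd where "Bd = lam * norm T / norm (U T)"
  assume "\<not> r \<le> lam * norm T / norm (U T)"
  then have rB: "Bd < r" unfolding Bd_def by simp
  have Bd0: "0 \<le> Bd" unfolding Bd_def using lam by simp
  define x where "x = (Bd + r) / 2"
  have x: "0 \<le> x" "x < r" "Bd < x" using rB Bd0 unfolding x_def by auto
  define e :: "1 \<Rightarrow> nat" where "e = (\<lambda>_. 1)"
  define f where "f = (\<lambda>z. cscale J (monom z e) T)"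
  have disc_ne: "unit_disc1 \<noteq> {}" using v1_in_disc[of 0] by auto
  have le1: "cmod (monom z e) \<le> 1" if "z \<in> unit_disc1" for z
    using that unfolding unit_disc1_def e_def by (simp add: monom_1)
  note tb = test_bounded[OF hJ disc_ne le1, of T, folded f_def]
  have ph: "ph_rep J unit_disc1 f (\<lambda>\<alpha>. if \<alpha> = e then T else 0) (\<lambda>_. 0)"
    unfolding f_def by (rule test_ph_rep[OF T(1)])
  have zin: "v1 (complex_of_real x) \<in> (\<lambda>w. r *\<^sub>R w) ` unit_disc1"
  proof
    show "v1 (complex_of_real x) = r *\<^sub>R v1 (complex_of_real (x / r))"
    proof -
      have "r *\<^sub>R complex_of_real (x / r) = complex_of_real x" using x by (simp add: scaleR_conv_of_real)
      then show ?thesis by (simp add: vec_eq_iff)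
    qed
    show "v1 (complex_of_real (x / r)) \<in> unit_disc1"
    proof (intro v1_in_disc)
      have "cmod (complex_of_real (x / r)) = x / r" using x
        by (simp only: norm_of_real) (simp add: abs_of_nonneg)
      also have "\<dots> < 1" using x by simp
      finally show "cmod (complex_of_real (x / r)) < 1" .
    qed
  qed
  have "nnsum_le (\<lambda>\<alpha>. (norm (U (if \<alpha> = e then T else 0)) powr p + norm (U 0) powr p)
          * cmod (monom (v1 (complex_of_real x)) \<alpha>) powr p) (lam powr p * supnorm unit_disc1 f powr p)"
    using r(2) ph tb(1) zin unfolding Rcond_def by fastforce
  from test_nnsum[OF U _ this] have
    "norm (U T) powr p * cmod (monom (v1 (complex_of_real x)) e) powr p \<le> lam powr p * supnorm unit_disc1 f powr p"
    by simp
  also have "\<dots> \<le> lam powr p * norm T powr p"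
    using tb(2) supnorm_nonneg[OF tb(1) v1_in_disc[of 0]] lam p
    by (intro mult_left_mono powr_mono2) auto
  finally have "norm (U T) powr p * x powr p \<le> lam powr p * norm T powr p"
    using x by (simp add: monom_1 e_def)
  then have "x \<le> Bd" unfolding Bd_def using x p lam T(2) by (intro powr_cancel_bound) auto
  then show False using x by simp
qed

lemma AP_bdd:
  fixes N :: "complex ^ 'n::finite \<Rightarrow> real"
  assumes hJ: "hilbert_cstruct J" and U: "bounded_clinear_U J Jy U" and T: "T \<in> Bop J" "U T \<noteq> 0"
    and p: "1 \<le> p" and lam: "0 \<le> lam"
    and N: "is_cnorm N" "normalized_1_unconditional N"
    and r: "\<forall>i. 0 \<le> r $ i" "APcond J U lam (unit_ball_N N) p r"
  shows "r $ i \<le> lam * norm T / norm (U T)"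
proof -
  define e :: "'n \<Rightarrow> nat" where "e = (\<lambda>j. if j = i then 1 else 0)"
  define f where "f = (\<lambda>z. cscale J (monom z e) T)"
  have 0: "0 \<in> unit_ball_N N" using N_zero[OF N(1)] unfolding unit_ball_N_def by auto
  then have ball_ne: "unit_ball_N N \<noteq> {}" by blast
  have le1: "cmod (monom z e) \<le> 1" if "z \<in> unit_ball_N N" for z
    using that N_coord[OF N, of z i] unfolding unit_ball_N_def e_def monom_unit by simp
  note tb = test_bounded[OF hJ ball_ne le1, of T, folded f_def]
  have ph: "ph_rep J (unit_ball_N N) f (\<lambda>\<alpha>. if \<alpha> = e then T else 0) (\<lambda>_. 0)"
    unfolding f_def by (rule test_ph_rep[OF T(1)])
  have "nnsum_le (\<lambda>\<alpha>. (norm (U (if \<alpha> = e then T else 0)) powr p + norm (U 0) powr p)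
          * rmonom r \<alpha> powr p) (lam powr p * supnorm (unit_ball_N N) f powr p)"
    using r(2) ph tb(1) unfolding APcond_def by fastforce
  from test_nnsum[OF U _ this] have
    "norm (U T) powr p * rmonom r e powr p \<le> lam powr p * supnorm (unit_ball_N N) f powr p"
    by simp
  also have "\<dots> \<le> lam powr p * norm T powr p"
    using tb(2) supnorm_nonneg[OF tb(1) 0] lam p
    by (intro mult_left_mono powr_mono2) auto
  finally have "norm (U T) powr p * (r $ i) powr p \<le> lam powr p * norm T powr p"
    by (simp add: e_def rmonom_unit)
  then show ?thesis using r(1) p lam T(2) by (intro powr_cancel_bound) auto
qed



lemma v1_scaled_in: "0 \<le> x \<Longrightarrow> x < r \<Longrightarrow> v1 (complex_of_real x) \<in> (\<lambda>w. r *\<^sub>R w) ` unit_disc1"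
proof
  assume x: "0 \<le> x" "x < r"
  show "v1 (complex_of_real x) = r *\<^sub>R v1 (complex_of_real (x / r))"
  proof -
    have "r *\<^sub>R complex_of_real (x / r) = complex_of_real x" using x by (simp add: scaleR_conv_of_real)
    then show ?thesis by (simp add: vec_eq_iff)
  qed
  show "v1 (complex_of_real (x / r)) \<in> unit_disc1"
  proof (intro v1_in_disc)
    have "cmod (complex_of_real (x / r)) = x / r" using x
      by (simp only: norm_of_real) (simp add: abs_of_nonneg)
    also have "\<dots> < 1" using x by simp
    finally show "cmod (complex_of_real (x / r)) < 1" .
  qed
qed

definition emb :: "'n \<Rightarrow> complex ^ 1 \<Rightarrow> complex ^ 'n::finite" where
  "emb i0 v = (\<chi> i. if i = i0 then v $ 1 else 0)"

definition Emb :: "'n \<Rightarrow> (1 \<Rightarrow> nat) \<Rightarrow> ('n::finite \<Rightarrow> nat)" where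
  "Emb i0 \<beta> = (\<lambda>i. if i = i0 then \<beta> 1 else 0)"

lemma Emb_inj: "inj (Emb i0)"
proof (rule injI)
  fix \<beta> \<beta>' :: "1 \<Rightarrow> nat" assume "Emb i0 \<beta> = Emb i0 \<beta>'"
  then have "\<beta> 1 = \<beta>' 1" unfolding Emb_def by (metis (full_types))
  then show "\<beta> = \<beta>'" by (metis ext num1_eq1)
qed

lemma Emb_range: "(\<alpha> \<in> range (Emb i0)) \<longleftrightarrow> (\<forall>i. i \<noteq> i0 \<longrightarrow> \<alpha> i = 0)"
proof
  assume "\<forall>i. i \<noteq> i0 \<longrightarrow> \<alpha> i = 0"
  then have "\<alpha> = Emb i0 (\<lambda>_. \<alpha> i0)" unfolding Emb_def by auto
  then show "\<alpha> \<in> range (Emb i0)" by blast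
qed (auto simp: Emb_def)

lemma Emb_zero: "Emb i0 (\<lambda>_. 0) = (\<lambda>_. 0)" unfolding Emb_def by auto

lemma prod_emb_gen:
  fixes c :: "'a::comm_semiring_1"
  shows "(\<Prod>i\<in>(UNIV::'n::finite set). (if i = i0 then c else 0) ^ \<alpha> i)
       = (if \<forall>i. i \<noteq> i0 \<longrightarrow> \<alpha> i = 0 then c ^ \<alpha> i0 else 0)"
proof (cases "\<forall>i. i \<noteq> i0 \<longrightarrow> \<alpha> i = 0")
  case True
  then have "(\<Prod>i\<in>(UNIV::'n set). (if i = i0 then c else 0) ^ \<alpha> i) = (\<Prod>i\<in>(UNIV::'n set). if i = i0 then c ^ \<alpha> i0 else 1)"
    by (intro prod.cong) auto
  then show ?thesis using True by (simp add: prod.delta)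
next
  case False
  then obtain j where j: "j \<noteq> i0" "\<alpha> j \<noteq> 0" by blast
  have "(\<Prod>i\<in>(UNIV::'n set). (if i = i0 then c else 0) ^ \<alpha> i) = 0"
    apply (rule prod_zero)
     apply simp
    apply (rule bexI[of _ j])
    using j by (auto simp: zero_power)
  then show ?thesis using False by auto
qed

lemma monom_emb: "monom (emb i0 v) \<alpha> = (if \<forall>i. i \<noteq> i0 \<longrightarrow> \<alpha> i = 0 then (v $ 1) ^ \<alpha> i0 else 0)"
  unfolding monom_def emb_def by (simp add: prod_emb_gen)

lemma monom_emb_Emb: "monom (emb i0 v) (Emb i0 \<beta>) = monom v \<beta>"
  by (simp add: monom_emb monom_1 Emb_def)

lemma rmonom_emb: "rmonom (\<chi> i. if i = i0 then x else 0) \<alpha> = (if \<forall>i. i \<noteq> i0 \<longrightarrow> \<alpha> i = 0 then x ^ \<alpha> i0 else 0)"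
  unfolding rmonom_def by (simp add: prod_emb_gen)

lemma has_sum_Emb:
  fixes h :: "('n::finite \<Rightarrow> nat) \<Rightarrow> 'v::{comm_monoid_add,topological_space}"
  assumes "\<And>\<alpha>. \<alpha> \<notin> range (Emb i0) \<Longrightarrow> h \<alpha> = 0"
  shows "(h has_sum s) UNIV \<longleftrightarrow> ((\<lambda>\<beta>. h (Emb i0 \<beta>)) has_sum s) UNIV"
proof -
  have "(h has_sum s) UNIV \<longleftrightarrow> (h has_sum s) (range (Emb i0))"
    by (rule has_sum_cong_neutral) (use assms in auto)
  also have "\<dots> \<longleftrightarrow> ((h \<circ> Emb i0) has_sum s) UNIV"
    by (rule has_sum_reindex[OF Emb_inj])
  finally show ?thesis by (simp add: comp_def)
qed

lemma emb_in_ball: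
  fixes N :: "complex ^ 'n::finite \<Rightarrow> real"
  assumes N: "is_cnorm N" "normalized_1_unconditional N" and v: "v \<in> unit_disc1"
  shows "emb i0 v \<in> unit_ball_N N"
proof -
  have "emb i0 v = (v $ 1) *s axis i0 1" by (simp add: emb_def vec_eq_iff axis_def)
  then have "N (emb i0 v) = cmod (v $ 1) * N (axis i0 1)" using N(1) unfolding is_cnorm_def by simp
  also have "\<dots> = cmod (v $ 1)" using N(2) unfolding normalized_1_unconditional_def by simp
  finally show ?thesis using v unfolding unit_ball_N_def unit_disc1_def by simp
qed

lemma LB_elem:
  fixes N :: "complex ^ 'n::finite \<Rightarrow> real"
  assumes N: "is_cnorm N" "normalized_1_unconditional N"
    and p: "1 \<le> p" and lam: "0 \<le> lam"
    and R: "Rcond J U lam unit_disc1 p \<rho>" and x: "0 \<le> x" "x < \<rho>"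
  shows "APcond J U lam (unit_ball_N N) p (\<chi> i. if i = i0 then x else 0)"
  unfolding APcond_def
proof (intro allI impI)
  fix f a b assume fab: "ph_rep J (unit_ball_N N) f a b \<and> bounded (f ` unit_ball_N N)"
  define g where "g = (\<lambda>v. f (emb i0 v))"
  define ag where "ag = (\<lambda>\<beta>. a (Emb i0 \<beta>))"
  define bg where "bg = (\<lambda>\<beta>. b (Emb i0 \<beta>))"
  have ph: "ph_rep J unit_disc1 g ag bg"
    unfolding ph_rep_def
  proof (intro conjI allI ballI)
    show "ag \<beta> \<in> Bop J" "bg \<beta> \<in> Bop J" for \<beta>
      using fab unfolding ph_rep_def ag_def bg_def by auto
    show "bg (\<lambda>_. 0) = 0" using fab unfolding ph_rep_def bg_def Emb_zero by auto
    fix v assume v: "v \<in> unit_disc1"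
    have z: "emb i0 v \<in> unit_ball_N N" by (rule emb_in_ball[OF N v])
    have s1: "(\<lambda>\<alpha>. cscale J (monom (emb i0 v) \<alpha>) (a \<alpha>)) summable_on UNIV"
      and s2: "(\<lambda>\<alpha>. cscale J (cnj (monom (emb i0 v) \<alpha>)) (hadj (b \<alpha>))) summable_on UNIV"
      and fz: "f (emb i0 v) = (\<Sum>\<^sub>\<infinity>\<alpha>. cscale J (monom (emb i0 v) \<alpha>) (a \<alpha>))
                  + (\<Sum>\<^sub>\<infinity>\<alpha>. cscale J (cnj (monom (emb i0 v) \<alpha>)) (hadj (b \<alpha>)))"
      using fab z unfolding ph_rep_def by auto
    have e1: "\<And>\<alpha>. \<alpha> \<notin> range (Emb i0) \<Longrightarrow> cscale J (monom (emb i0 v) \<alpha>) (a \<alpha>) = 0"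
      by (auto simp: monom_emb Emb_range)
    have e2: "\<And>\<alpha>. \<alpha> \<notin> range (Emb i0) \<Longrightarrow> cscale J (cnj (monom (emb i0 v) \<alpha>)) (hadj (b \<alpha>)) = 0"
      by (auto simp: monom_emb Emb_range)
    have "((\<lambda>\<beta>. cscale J (monom (emb i0 v) (Emb i0 \<beta>)) (a (Emb i0 \<beta>))) has_sum (\<Sum>\<^sub>\<infinity>\<alpha>. cscale J (monom (emb i0 v) \<alpha>) (a \<alpha>))) UNIV"
      using has_sum_Emb[of i0 "\<lambda>\<alpha>. cscale J (monom (emb i0 v) \<alpha>) (a \<alpha>)", OF e1] has_sum_infsum[OF s1] by blast
    then have h1: "((\<lambda>\<beta>. cscale J (monom v \<beta>) (ag \<beta>)) has_sum (\<Sum>\<^sub>\<infinity>\<alpha>. cscale J (monom (emb i0 v) \<alpha>) (a \<alpha>))) UNIV"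
      unfolding monom_emb_Emb ag_def .
    have "((\<lambda>\<beta>. cscale J (cnj (monom (emb i0 v) (Emb i0 \<beta>))) (hadj (b (Emb i0 \<beta>)))) has_sum (\<Sum>\<^sub>\<infinity>\<alpha>. cscale J (cnj (monom (emb i0 v) \<alpha>)) (hadj (b \<alpha>)))) UNIV"
      using has_sum_Emb[of i0 "\<lambda>\<alpha>. cscale J (cnj (monom (emb i0 v) \<alpha>)) (hadj (b \<alpha>))", OF e2] has_sum_infsum[OF s2] by blast
    then have h2: "((\<lambda>\<beta>. cscale J (cnj (monom v \<beta>)) (hadj (bg \<beta>))) has_sum (\<Sum>\<^sub>\<infinity>\<alpha>. cscale J (cnj (monom (emb i0 v) \<alpha>)) (hadj (b \<alpha>)))) UNIV"
      unfolding monom_emb_Emb bg_def .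
    show "(\<lambda>\<beta>. cscale J (monom v \<beta>) (ag \<beta>)) summable_on UNIV"
      using h1 unfolding summable_on_def by blast
    show "(\<lambda>\<beta>. cscale J (cnj (monom v \<beta>)) (hadj (bg \<beta>))) summable_on UNIV"
      using h2 unfolding summable_on_def by blast
    show "g v = (\<Sum>\<^sub>\<infinity>\<beta>. cscale J (monom v \<beta>) (ag \<beta>)) + (\<Sum>\<^sub>\<infinity>\<beta>. cscale J (cnj (monom v \<beta>)) (hadj (bg \<beta>)))"
      unfolding g_def fz using infsumI[OF h1] infsumI[OF h2] by simp
  qed
  have gsub: "g ` unit_disc1 \<subseteq> f ` unit_ball_N N"
    unfolding g_def using emb_in_ball[OF N] by auto
  have bg': "bounded (g ` unit_disc1)" using fab gsub bounded_subset by blast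
  have disc0: "v1 0 \<in> unit_disc1" by (rule v1_in_disc) simp
  have sup_le: "supnorm unit_disc1 g \<le> supnorm (unit_ball_N N) f"
    unfolding supnorm_def[of unit_disc1]
  proof (rule cSUP_least)
    show "unit_disc1 \<noteq> {}" using disc0 by blast
    fix v assume "v \<in> unit_disc1"
    then show "norm (g v) \<le> supnorm (unit_ball_N N) f"
      unfolding g_def using fab emb_in_ball[OF N] supnorm_ge by blast
  qed
  have sup0: "0 \<le> supnorm unit_disc1 g" by (rule supnorm_nonneg[OF bg' disc0])
  define tg where "tg = (\<lambda>\<beta>. (norm (U (ag \<beta>)) powr p + norm (U (bg \<beta>)) powr p)
          * cmod (monom (v1 (complex_of_real x)) \<beta>) powr p)"
  have "nnsum_le tg (lam powr p * supnorm unit_disc1 g powr p)"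
    using R ph bg' v1_scaled_in[OF x] unfolding Rcond_def tg_def by blast
  then have fin: "sum tg G \<le> lam powr p * supnorm unit_disc1 g powr p" if "finite G" for G
    using that by (subst (asm) nnsum_le_iff) (auto simp: tg_def)
  define tf where "tf = (\<lambda>\<alpha>. (norm (U (a \<alpha>)) powr p + norm (U (b \<alpha>)) powr p)
          * rmonom (\<chi> i. if i = i0 then x else 0) \<alpha> powr p)"
  have tf0: "tf \<alpha> = 0" if "\<alpha> \<notin> range (Emb i0)" for \<alpha>
    using that unfolding tf_def by (auto simp: rmonom_emb Emb_range)
  have tfE: "tf (Emb i0 \<beta>) = tg \<beta>" for \<beta>
  proof -
    have "rmonom (\<chi> i. if i = i0 then x else 0) (Emb i0 \<beta>) = cmod (monom (v1 (complex_of_real x)) \<beta>)"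
      using x by (simp add: rmonom_emb Emb_def monom_1 norm_power abs_of_nonneg)
    then show ?thesis unfolding tf_def tg_def ag_def bg_def by simp
  qed
  have "nnsum_le tf (lam powr p * supnorm (unit_ball_N N) f powr p)"
  proof (subst nnsum_le_iff, unfold tf_def, simp, intro allI impI, fold tf_def)
    fix F :: "('n \<Rightarrow> nat) set" assume F: "finite F"
    have "sum tf F = sum tf (F \<inter> range (Emb i0))"
      by (rule sum.mono_neutral_right) (use F tf0 in auto)
    also have "F \<inter> range (Emb i0) = Emb i0 ` (Emb i0 -` F)" by auto
    also have "sum tf (Emb i0 ` (Emb i0 -` F)) = sum tg (Emb i0 -` F)"
      by (subst sum.reindex) (auto intro: inj_on_subset[OF Emb_inj] simp: tfE)
    also have "\<dots> \<le> lam powr p * supnorm unit_disc1 g powr p"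
      by (rule fin) (rule finite_vimageI[OF F Emb_inj])
    also have "\<dots> \<le> lam powr p * supnorm (unit_ball_N N) f powr p"
      using sup_le sup0 p by (intro mult_left_mono powr_mono2) auto
    finally show "sum tf F \<le> lam powr p * supnorm (unit_ball_N N) f powr p" .
  qed
  then show "nnsum_le (\<lambda>\<alpha>. (norm (U (a \<alpha>)) powr p + norm (U (b \<alpha>)) powr p)
          * rmonom (\<chi> i. if i = i0 then x else 0) \<alpha> powr p) (lam powr p * supnorm (unit_ball_N N) f powr p)"
    unfolding tf_def .
qed



section \<open>Series lemmas for the upper bound\<close>

definition c1 :: "nat \<Rightarrow> (1 \<Rightarrow> nat)" where "c1 k = (\<lambda>_. k)"

lemma c1_bij: "bij c1"
proof (rule bijI)
  show "inj c1" unfolding c1_def by (rule injI) (metis)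
  show "surj c1"
  proof -
    have "\<beta> = c1 (\<beta> 1)" for \<beta> :: "1 \<Rightarrow> nat" unfolding c1_def by (metis ext num1_eq1)
    then show ?thesis by (rule surjI[of c1 "\<lambda>\<beta>. \<beta> 1", OF sym])
  qed
qed

lemma has_sum_c1: "(h has_sum s) (UNIV :: (1 \<Rightarrow> nat) set) \<longleftrightarrow> ((\<lambda>k. h (c1 k)) has_sum s) UNIV"
  using has_sum_reindex_bij_betw[OF c1_bij, of h s] by simp

lemma monom_v1_c1: "monom (v1 u) (c1 k) = u ^ k"
  by (simp add: monom_1 c1_def)

lemma abs_conv:
  assumes hJ: "hilbert_cstruct J"
    and s0: "(\<lambda>k. cscale J (complex_of_real (w0 ^ k)) (A k)) summable_on UNIV"
    and t: "0 \<le> t" "t < w0"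
  shows "summable (\<lambda>k. norm (A k) * t ^ k)"
proof -
  have w0: "0 < w0" using t by linarith
  have "summable (\<lambda>k. cscale J (complex_of_real (w0 ^ k)) (A k))"
    by (rule summable_on_imp_summable[OF s0])
  then have "(\<lambda>k. cscale J (complex_of_real (w0 ^ k)) (A k)) \<longlonglongrightarrow> 0"
    by (rule summable_LIMSEQ_zero)
  then have "Bseq (\<lambda>k. cscale J (complex_of_real (w0 ^ k)) (A k))"
    by (intro convergent_imp_Bseq) (auto simp: convergent_def)
  then obtain C where C: "C > 0" "\<And>k. norm (cscale J (complex_of_real (w0 ^ k)) (A k)) \<le> C"
    unfolding Bseq_def by blast
  have CA: "w0 ^ k * norm (A k) \<le> C" for k
    using C(2)[of k] w0 by (simp add: norm_cscale[OF hJ] norm_power abs_of_pos)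
  show ?thesis
  proof (rule summable_comparison_test')
    show "summable (\<lambda>k. C * (t / w0) ^ k)"
      using t w0 by (intro summable_mult summable_geometric) (simp add: abs_of_nonneg)
    fix k :: nat
    have "norm (norm (A k) * t ^ k) = (w0 ^ k * norm (A k)) * (t / w0) ^ k"
      using t w0 by (simp add: power_divide abs_of_nonneg)
    also have "\<dots> \<le> C * (t / w0) ^ k"
      using CA[of k] t w0 by (intro mult_right_mono) auto
    finally show "norm (norm (A k) * t ^ k) \<le> C * (t / w0) ^ k" .
  qed
qed

lemma cmod_monom: "cmod (monom x \<alpha>) = (\<Prod>i\<in>UNIV. cmod (x $ i) ^ \<alpha> i)"
  unfolding monom_def by (simp add: prod_norm[symmetric] norm_power)

lemma series_regroup:
  assumes hJ: "hilbert_cstruct J"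
    and sG: "summable (\<lambda>k. norm (A k) * (\<Sum>i\<in>UNIV. cmod (x $ i)) ^ k)"
    and sH: "(\<lambda>k. cscale J ((\<Sum>i\<in>UNIV. x $ i) ^ k) (A k)) sums L"
  shows "((\<lambda>\<alpha>. cscale J (of_nat (mc \<alpha>) * monom (x :: complex ^ 'n::finite) \<alpha>) (A (deg \<alpha>))) has_sum L) UNIV"
proof (rule has_sum_regroup[OF _ sG _ sH])
  fix k
  have "(\<Sum>\<alpha>\<in>Ak k. norm (cscale J (of_nat (mc \<alpha>) * monom x \<alpha>) (A (deg \<alpha>))))
      = (\<Sum>\<alpha>\<in>Ak k. norm (A k) * (of_nat (mc \<alpha>) * (\<Prod>i\<in>UNIV. cmod (x $ i) ^ \<alpha> i)))"
    by (intro sum.cong refl) (auto simp: Ak_def norm_cscale[OF hJ] norm_mult cmod_monom)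
  also have "\<dots> = norm (A k) * (\<Sum>i\<in>UNIV. cmod (x $ i)) ^ k"
    by (simp add: multinomial[of "\<lambda>i. cmod (x $ i)"] sum_distrib_left)
  finally show "(\<Sum>\<alpha>\<in>Ak k. norm (cscale J (of_nat (mc \<alpha>) * monom x \<alpha>) (A (deg \<alpha>))))
      \<le> norm (A k) * (\<Sum>i\<in>UNIV. cmod (x $ i)) ^ k" by simp
next
  fix k
  have "(\<Sum>\<alpha>\<in>Ak k. cscale J (of_nat (mc \<alpha>) * monom x \<alpha>) (A (deg \<alpha>)))
      = (\<Sum>\<alpha>\<in>Ak k. cscale J (of_nat (mc \<alpha>) * monom x \<alpha>) (A k))"
    by (intro sum.cong refl) (auto simp: Ak_def)
  also have "\<dots> = cscale J (\<Sum>\<alpha>\<in>Ak k. of_nat (mc \<alpha>) * monom x \<alpha>) (A k)"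
    by (simp add: cscale_sum)
  also have "(\<Sum>\<alpha>\<in>Ak k. of_nat (mc \<alpha>) * monom x \<alpha>) = (\<Sum>i\<in>UNIV. x $ i) ^ k"
    unfolding monom_def by (simp add: multinomial[of "\<lambda>i. x $ i"])
  finally show "(\<Sum>\<alpha>\<in>Ak k. cscale J (of_nat (mc \<alpha>) * monom x \<alpha>) (A (deg \<alpha>)))
      = cscale J ((\<Sum>i\<in>UNIV. x $ i) ^ k) (A k)" .
qed

lemma series_piece:
  assumes hJ: "hilbert_cstruct J"
    and s0: "(\<lambda>k. cscale J (complex_of_real (w0 ^ k)) (A k)) summable_on UNIV"
    and t: "(\<Sum>i\<in>UNIV. cmod (x $ i)) < w0"
    and sv: "((\<lambda>k. cscale J ((\<Sum>i\<in>UNIV. x $ i) ^ k) (A k)) has_sum L) UNIV"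
  shows "((\<lambda>\<alpha>. cscale J (of_nat (mc \<alpha>) * monom (x :: complex ^ 'n::finite) \<alpha>) (A (deg \<alpha>))) has_sum L) UNIV"
proof (rule series_regroup[OF hJ])
  show "summable (\<lambda>k. norm (A k) * (\<Sum>i\<in>UNIV. cmod (x $ i)) ^ k)"
    by (rule abs_conv[OF hJ s0 _ t]) (simp add: sum_nonneg)
  show "(\<lambda>k. cscale J ((\<Sum>i\<in>UNIV. x $ i) ^ k) (A k)) sums L"
    by (rule has_sum_imp_sums[OF sv])
qed



lemma monom_scale:
  assumes "c \<noteq> 0"
  shows "monom (\<chi> i. y $ i / complex_of_real c) \<alpha> = monom y \<alpha> / complex_of_real c ^ deg \<alpha>"
proof -
  have "monom (\<chi> i. y $ i / complex_of_real c) \<alpha> = (\<Prod>i\<in>UNIV. (y $ i) ^ \<alpha> i / complex_of_real c ^ \<alpha> i)"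
    unfolding monom_def by (simp add: power_divide)
  also have "\<dots> = monom y \<alpha> / (\<Prod>i\<in>UNIV. complex_of_real c ^ \<alpha> i)"
    unfolding monom_def by (simp add: prod_dividef)
  also have "(\<Prod>i\<in>UNIV. complex_of_real c ^ \<alpha> i) = complex_of_real c ^ deg \<alpha>"
    unfolding deg_def by (simp add: power_sum)
  finally show ?thesis .
qed

lemma cnj_monom: "cnj (monom z \<alpha>) = monom (\<chi> i. cnj (z $ i)) \<alpha>"
  unfolding monom_def by (simp add: cnj_prod)

lemma coef_identity:
  assumes "c \<noteq> 0"
  shows "cscale J u ((real (mc \<alpha>) / c ^ deg \<alpha>) *\<^sub>R T)
       = cscale J (of_nat (mc \<alpha>) * (u / complex_of_real c ^ deg \<alpha>)) T"
proof -
  have "complex_of_real (real (mc \<alpha>) / c ^ deg \<alpha>) * u = of_nat (mc \<alpha>) * (u / complex_of_real c ^ deg \<alpha>)"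
    by (simp add: field_simps)
  then show ?thesis by (simp add: cscale_scaleR)
qed

lemma UB_construct:
  fixes N :: "complex ^ 'n::finite \<Rightarrow> real"
    and J :: "'h::{real_inner,complete_space} \<Rightarrow>\<^sub>L 'h"
  assumes hJ: "hilbert_cstruct J" and N: "is_cnorm N" "normalized_1_unconditional N"
    and ph: "ph_rep J unit_disc1 g a b"
    and c_def: "c = id_to_l1_norm N"
    and a'_def: "a' = (\<lambda>\<alpha>. (real (mc \<alpha>) / c ^ deg \<alpha>) *\<^sub>R a (c1 (deg \<alpha>)))"
    and b'_def: "b' = (\<lambda>\<alpha>. (real (mc \<alpha>) / c ^ deg \<alpha>) *\<^sub>R b (c1 (deg \<alpha>)))"
    and f_def: "f = (\<lambda>z. (\<Sum>\<^sub>\<infinity>\<alpha>. cscale J (monom z \<alpha>) (a' \<alpha>)) + (\<Sum>\<^sub>\<infinity>\<alpha>. cscale J (cnj (monom z \<alpha>)) (hadj (b' \<alpha>))))"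
  shows "ph_rep J (unit_ball_N N) f a' b'"
    and "\<And>z. z \<in> unit_ball_N N \<Longrightarrow> v1 ((\<Sum>i\<in>UNIV. z $ i) / complex_of_real c) \<in> unit_disc1 \<and>
                f z = g (v1 ((\<Sum>i\<in>UNIV. z $ i) / complex_of_real c))"
proof -
  have c1: "1 \<le> c" unfolding c_def by (rule l1_norm_ge1[OF N])
  then have c0: "c \<noteq> 0" by auto
  have main: "((\<lambda>\<alpha>. cscale J (monom z \<alpha>) (a' \<alpha>)) has_sum (\<Sum>\<^sub>\<infinity>\<beta>. cscale J (monom (v1 ((\<Sum>i\<in>UNIV. z $ i) / complex_of_real c)) \<beta>) (a \<beta>))) UNIV
      \<and> ((\<lambda>\<alpha>. cscale J (cnj (monom z \<alpha>)) (hadj (b' \<alpha>))) has_sum (\<Sum>\<^sub>\<infinity>\<beta>. cscale J (cnj (monom (v1 ((\<Sum>i\<in>UNIV. z $ i) / complex_of_real c)) \<beta>)) (hadj (b \<beta>)))) UNIV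
      \<and> v1 ((\<Sum>i\<in>UNIV. z $ i) / complex_of_real c) \<in> unit_disc1"
    if z: "z \<in> unit_ball_N N" for z
  proof -
    define x where "x = (\<chi> i. z $ i / complex_of_real c)"
    define x' where "x' = (\<chi> i. cnj (z $ i) / complex_of_real c)"
    define w where "w = (\<Sum>i\<in>UNIV. z $ i) / complex_of_real c"
    define t where "t = (\<Sum>i\<in>UNIV. cmod (x $ i))"
    have t_eq: "t = (\<Sum>i\<in>UNIV. cmod (z $ i)) / c"
      unfolding t_def x_def using c1 by (simp add: norm_divide sum_divide_distrib)
    have t': "(\<Sum>i\<in>UNIV. cmod (x' $ i)) = t"
      unfolding t_eq x'_def using c1 by (simp add: norm_divide sum_divide_distrib)
    have "(\<Sum>i\<in>UNIV. cmod (z $ i)) \<le> c * N z" unfolding c_def by (rule l1_le_N[OF N])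
    then have t_le: "t \<le> N z" unfolding t_eq using c1 by (simp add: divide_le_eq mult.commute)
    have t1: "t < 1" using t_le z unfolding unit_ball_N_def by simp
    have t0: "0 \<le> t" unfolding t_def by (simp add: sum_nonneg)
    have w_eq: "w = (\<Sum>i\<in>UNIV. x $ i)" unfolding w_def x_def by (simp add: sum_divide_distrib)
    have w'_eq: "cnj w = (\<Sum>i\<in>UNIV. x' $ i)"
      unfolding w_def x'_def by (simp add: sum_divide_distrib cnj_sum)
    have wt: "cmod w \<le> t" unfolding w_eq t_def by (rule norm_sum)
    have v: "v1 w \<in> unit_disc1" using wt t1 by (intro v1_in_disc) simp
    define w0 where "w0 = (t + 1) / 2"
    have w0: "t < w0" "w0 < 1" "0 \<le> w0" using t0 t1 unfolding w0_def by auto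
    have v0: "v1 (complex_of_real w0) \<in> unit_disc1" using w0 by (intro v1_in_disc) simp
    have s0a: "(\<lambda>\<beta>. cscale J (monom (v1 (complex_of_real w0)) \<beta>) (a \<beta>)) summable_on UNIV"
      and s0b: "(\<lambda>\<beta>. cscale J (cnj (monom (v1 (complex_of_real w0)) \<beta>)) (hadj (b \<beta>))) summable_on UNIV"
      and sva: "(\<lambda>\<beta>. cscale J (monom (v1 w) \<beta>) (a \<beta>)) summable_on UNIV"
      and svb: "(\<lambda>\<beta>. cscale J (cnj (monom (v1 w) \<beta>)) (hadj (b \<beta>))) summable_on UNIV"
      using ph v0 v unfolding ph_rep_def by auto
    have s0a': "(\<lambda>k. cscale J (complex_of_real (w0 ^ k)) (a (c1 k))) summable_on UNIV"
      using s0a unfolding summable_on_def has_sum_c1 by (simp add: monom_v1_c1)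
    have s0b': "(\<lambda>k. cscale J (complex_of_real (w0 ^ k)) (hadj (b (c1 k)))) summable_on UNIV"
      using s0b unfolding summable_on_def has_sum_c1 by (simp add: monom_v1_c1)
    have sva': "((\<lambda>k. cscale J ((\<Sum>i\<in>UNIV. x $ i) ^ k) (a (c1 k))) has_sum
                 (\<Sum>\<^sub>\<infinity>\<beta>. cscale J (monom (v1 w) \<beta>) (a \<beta>))) UNIV"
      using has_sum_infsum[OF sva] unfolding has_sum_c1 by (simp add: monom_v1_c1 w_eq)
    have svb': "((\<lambda>k. cscale J ((\<Sum>i\<in>UNIV. x' $ i) ^ k) (hadj (b (c1 k)))) has_sum
                 (\<Sum>\<^sub>\<infinity>\<beta>. cscale J (cnj (monom (v1 w) \<beta>)) (hadj (b \<beta>)))) UNIV"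
      using has_sum_infsum[OF svb] unfolding has_sum_c1 by (simp add: monom_v1_c1 w'_eq[symmetric])
    have A: "((\<lambda>\<alpha>. cscale J (of_nat (mc \<alpha>) * monom x \<alpha>) (a (c1 (deg \<alpha>)))) has_sum
               (\<Sum>\<^sub>\<infinity>\<beta>. cscale J (monom (v1 w) \<beta>) (a \<beta>))) UNIV"
      by (rule series_piece[OF hJ s0a' _ sva']) (use w0 in \<open>simp add: t_def\<close>)
    have B: "((\<lambda>\<alpha>. cscale J (of_nat (mc \<alpha>) * monom x' \<alpha>) (hadj (b (c1 (deg \<alpha>))))) has_sum
               (\<Sum>\<^sub>\<infinity>\<beta>. cscale J (cnj (monom (v1 w) \<beta>)) (hadj (b \<beta>)))) UNIV"
      by (rule series_piece[OF hJ s0b' _ svb']) (use w0 t' in simp)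
    have eqA: "cscale J (monom z \<alpha>) (a' \<alpha>) = cscale J (of_nat (mc \<alpha>) * monom x \<alpha>) (a (c1 (deg \<alpha>)))" for \<alpha>
      unfolding a'_def coef_identity[OF c0] x_def monom_scale[OF c0] ..
    have eqB: "cscale J (cnj (monom z \<alpha>)) (hadj (b' \<alpha>)) = cscale J (of_nat (mc \<alpha>) * monom x' \<alpha>) (hadj (b (c1 (deg \<alpha>))))" for \<alpha>
    proof -
      have "x' = (\<chi> i. (\<chi> j. cnj (z $ j)) $ i / complex_of_real c)" unfolding x'_def by simp
      then have "monom x' \<alpha> = cnj (monom z \<alpha>) / complex_of_real c ^ deg \<alpha>"
        by (simp only: monom_scale[OF c0] cnj_monom)
      then show ?thesis unfolding b'_def hadj_scaleR coef_identity[OF c0] by simp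
    qed
    show ?thesis using A B v unfolding eqA eqB w_def by simp
  qed
  show "ph_rep J (unit_ball_N N) f a' b'"
    unfolding ph_rep_def
  proof (intro conjI allI ballI)
    show "a' \<alpha> \<in> Bop J" "b' \<alpha> \<in> Bop J" for \<alpha>
      using ph unfolding ph_rep_def a'_def b'_def by (auto intro: Bop_scaleR)
    show "b' (\<lambda>_. 0) = 0"
      using ph unfolding ph_rep_def b'_def by (simp add: deg_def c1_def)
    fix z assume "z \<in> unit_ball_N N"
    note m = main[OF this]
    show "(\<lambda>\<alpha>. cscale J (monom z \<alpha>) (a' \<alpha>)) summable_on UNIV"
      using m unfolding summable_on_def by blast
    show "(\<lambda>\<alpha>. cscale J (cnj (monom z \<alpha>)) (hadj (b' \<alpha>))) summable_on UNIV"
      using m unfolding summable_on_def by blast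
    show "f z = (\<Sum>\<^sub>\<infinity>\<alpha>. cscale J (monom z \<alpha>) (a' \<alpha>)) + (\<Sum>\<^sub>\<infinity>\<alpha>. cscale J (cnj (monom z \<alpha>)) (hadj (b' \<alpha>)))"
      unfolding f_def ..
  qed
  fix z assume z: "z \<in> unit_ball_N N"
  note m = main[OF z]
  have "g (v1 ((\<Sum>i\<in>UNIV. z $ i) / complex_of_real c)) =
      (\<Sum>\<^sub>\<infinity>\<beta>. cscale J (monom (v1 ((\<Sum>i\<in>UNIV. z $ i) / complex_of_real c)) \<beta>) (a \<beta>)) +
      (\<Sum>\<^sub>\<infinity>\<beta>. cscale J (cnj (monom (v1 ((\<Sum>i\<in>UNIV. z $ i) / complex_of_real c)) \<beta>)) (hadj (b \<beta>)))"
    using ph m unfolding ph_rep_def by blast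
  then show "v1 ((\<Sum>i\<in>UNIV. z $ i) / complex_of_real c) \<in> unit_disc1 \<and>
                f z = g (v1 ((\<Sum>i\<in>UNIV. z $ i) / complex_of_real c))"
  proof -
    have e1: "(\<Sum>\<^sub>\<infinity>\<alpha>. cscale J (monom z \<alpha>) (a' \<alpha>)) =
      (\<Sum>\<^sub>\<infinity>\<beta>. cscale J (monom (v1 ((\<Sum>i\<in>UNIV. z $ i) / complex_of_real c)) \<beta>) (a \<beta>))"
      using m by (intro infsumI) blast
    have e2: "(\<Sum>\<^sub>\<infinity>\<alpha>. cscale J (cnj (monom z \<alpha>)) (hadj (b' \<alpha>))) =
      (\<Sum>\<^sub>\<infinity>\<beta>. cscale J (cnj (monom (v1 ((\<Sum>i\<in>UNIV. z $ i) / complex_of_real c)) \<beta>)) (hadj (b \<beta>)))"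
      using m by (intro infsumI) blast
    show ?thesis using m \<open>g _ = _\<close> unfolding f_def e1 e2 by simp
  qed
qed



lemma rmonom_powr:
  assumes "\<And>i. 0 \<le> r $ i"
  shows "rmonom r \<alpha> powr p = (\<Prod>i\<in>UNIV. (r $ i powr p) ^ \<alpha> i)"
  unfolding rmonom_def prod_powr_distrib using assms by (simp add: powr_power_nat)

lemma nat_powr_ge: "1 \<le> p \<Longrightarrow> real m \<le> real m powr p"
proof (cases "m = 0")
  case False
  assume p: "1 \<le> p"
  then have "real m powr 1 \<le> real m powr p" using False by (intro powr_mono) auto
  then show ?thesis by simp
qed simp

lemma perk:
  fixes r :: "real ^ 'n::finite"
  assumes p: "1 \<le> p" and c: "1 \<le> c" and r: "\<And>i. 0 \<le> r $ i" and D: "0 \<le> D"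
    and q: "0 \<le> q" "q \<le> \<rho>"
    and \<rho>: "\<rho> = real CARD('n) powr (1 / p) * ((\<Sum>i\<in>UNIV. r $ i) / real CARD('n)) / c"
  shows "D * (q powr p) ^ k \<le> (\<Sum>\<alpha>\<in>Ak k. (real (mc \<alpha>) / c ^ k) powr p * D * rmonom r \<alpha> powr p)"
proof -
  define s where "s = (\<Sum>i\<in>UNIV. r $ i) / real CARD('n)"
  define n where "n = real CARD('n)"
  have s0: "0 \<le> s" unfolding s_def using r by (simp add: sum_nonneg)
  have n0: "0 < n" unfolding n_def by simp
  have cp: "0 < c powr p" using c by simp
  have rho_p: "\<rho> powr p = n * s powr p / c powr p"
  proof -
    have rr: "\<rho> = n powr (1 / p) * s / c" unfolding \<rho> s_def n_def ..
    have "\<rho> powr p = (n powr (1 / p)) powr p * s powr p / c powr p"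
      unfolding rr using n0 s0 c by (simp add: powr_divide powr_mult)
    also have "(n powr (1 / p)) powr p = n" using p n0 by (simp add: powr_powr)
    finally show ?thesis .
  qed
  have "D * (q powr p) ^ k \<le> D * (\<rho> powr p) ^ k"
    using q p D by (intro mult_left_mono power_mono powr_mono2) auto
  also have "\<dots> = D / (c powr p) ^ k * (n * s powr p) ^ k"
    unfolding rho_p by (simp add: power_divide)
  also have "\<dots> \<le> D / (c powr p) ^ k * (\<Sum>i\<in>UNIV. r $ i powr p) ^ k"
  proof (intro mult_left_mono power_mono)
    show "n * s powr p \<le> (\<Sum>i\<in>UNIV. r $ i powr p)"
      unfolding n_def s_def by (rule power_mean[OF _ p]) (use r in auto)
  qed (use D cp s0 n0 in auto)
  also have "\<dots> = D / (c powr p) ^ k * (\<Sum>\<alpha>\<in>Ak k. real (mc \<alpha>) * (\<Prod>i\<in>UNIV. (r $ i powr p) ^ \<alpha> i))"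
    by (simp add: multinomial[of "\<lambda>i. r $ i powr p"])
  also have "\<dots> = (\<Sum>\<alpha>\<in>Ak k. real (mc \<alpha>) / (c powr p) ^ k * D * rmonom r \<alpha> powr p)"
    by (simp add: sum_distrib_left rmonom_powr[OF r] algebra_simps)
  also have "\<dots> \<le> (\<Sum>\<alpha>\<in>Ak k. (real (mc \<alpha>) / c ^ k) powr p * D * rmonom r \<alpha> powr p)"
  proof (intro sum_mono mult_right_mono)
    fix \<alpha> :: "'n \<Rightarrow> nat"
    have "(real (mc \<alpha>) / c ^ k) powr p = real (mc \<alpha>) powr p / (c powr p) ^ k"
      using c by (simp add: powr_divide powr_power_nat)
    then show "real (mc \<alpha>) / (c powr p) ^ k \<le> (real (mc \<alpha>) / c ^ k) powr p"
      using nat_powr_ge[OF p, of "mc \<alpha>"] cp by (simp add: divide_right_mono)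
  qed (use D in auto)
  finally show ?thesis .
qed

lemma UB_Rcond:
  fixes N :: "complex ^ 'n::finite \<Rightarrow> real"
    and J :: "'h::{real_inner,complete_space} \<Rightarrow>\<^sub>L 'h"
    and U :: "('h \<Rightarrow>\<^sub>L 'h) \<Rightarrow> 'y::banach"
  assumes hJ: "hilbert_cstruct J" and U: "bounded_clinear_U J Jy U"
    and N: "is_cnorm N" "normalized_1_unconditional N"
    and p: "1 \<le> p" and lam: "0 \<le> lam"
    and r: "\<forall>i. 0 \<le> r $ i" "APcond J U lam (unit_ball_N N) p r"
    and \<rho>: "\<rho> = real CARD('n) powr (1 / p) * ((\<Sum>i\<in>UNIV. r $ i) / real CARD('n)) / id_to_l1_norm N"
  shows "Rcond J U lam unit_disc1 p \<rho>"
  unfolding Rcond_def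
proof (intro allI impI ballI)
  fix g a b z
  assume gab: "ph_rep J unit_disc1 g a b \<and> bounded (g ` unit_disc1)"
    and z: "z \<in> (\<lambda>w. \<rho> *\<^sub>R w) ` unit_disc1"
  define c where "c = id_to_l1_norm N"
  have c1: "1 \<le> c" unfolding c_def by (rule l1_norm_ge1[OF N])
  have \<rho>0: "0 \<le> \<rho>" unfolding \<rho> using c1 r(1) by (simp add: sum_nonneg c_def[symmetric])
  define a' where "a' = (\<lambda>\<alpha>::'n \<Rightarrow> nat. (real (mc \<alpha>) / c ^ deg \<alpha>) *\<^sub>R a (c1 (deg \<alpha>)))"
  define b' where "b' = (\<lambda>\<alpha>::'n \<Rightarrow> nat. (real (mc \<alpha>) / c ^ deg \<alpha>) *\<^sub>R b (c1 (deg \<alpha>)))"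
  define f where "f = (\<lambda>z. (\<Sum>\<^sub>\<infinity>\<alpha>. cscale J (monom z \<alpha>) (a' \<alpha>)) + (\<Sum>\<^sub>\<infinity>\<alpha>. cscale J (cnj (monom z \<alpha>)) (hadj (b' \<alpha>))))"
  note UC = UB_construct[OF hJ N conjunct1[OF gab] c_def a'_def b'_def f_def]
  have fsub: "f ` unit_ball_N N \<subseteq> g ` unit_disc1" using UC(2) by force
  have fb: "bounded (f ` unit_ball_N N)" using gab fsub bounded_subset by blast
  have ball0: "0 \<in> unit_ball_N N" using N_zero[OF N(1)] unfolding unit_ball_N_def by auto
  have disc0: "v1 0 \<in> unit_disc1" by (rule v1_in_disc) simp
  have sup_le: "supnorm (unit_ball_N N) f \<le> supnorm unit_disc1 g"
    unfolding supnorm_def[of "unit_ball_N N"]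
  proof (rule cSUP_least)
    show "unit_ball_N N \<noteq> {}" using ball0 by blast
    fix z' assume "z' \<in> unit_ball_N N"
    then show "norm (f z') \<le> supnorm unit_disc1 g"
      using UC(2) gab supnorm_ge by metis
  qed
  have supf0: "0 \<le> supnorm (unit_ball_N N) f" by (rule supnorm_nonneg[OF fb ball0])
  define tf where "tf = (\<lambda>\<alpha>. (norm (U (a' \<alpha>)) powr p + norm (U (b' \<alpha>)) powr p) * rmonom r \<alpha> powr p)"
  have "nnsum_le tf (lam powr p * supnorm (unit_ball_N N) f powr p)"
    using r(2) UC(1) fb unfolding APcond_def tf_def by blast
  then have finf: "sum tf F \<le> lam powr p * supnorm (unit_ball_N N) f powr p" if "finite F" for F
    using that by (subst (asm) nnsum_le_iff) (auto simp: tf_def)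
  define D where "D = (\<lambda>k. norm (U (a (c1 k))) powr p + norm (U (b (c1 k))) powr p)"
  have aB: "a \<beta> \<in> Bop J" "b \<beta> \<in> Bop J" for \<beta> using gab unfolding ph_rep_def by auto
  have tf_eq: "tf \<alpha> = (real (mc \<alpha>) / c ^ k) powr p * D k * rmonom r \<alpha> powr p" if "\<alpha> \<in> Ak k" for \<alpha> k
  proof -
    have dk: "deg \<alpha> = k" using that by (simp add: Ak_def)
    have nn: "0 \<le> real (mc \<alpha>) / c ^ k" using c1 by simp
    have na: "norm (U (a' \<alpha>)) powr p = (real (mc \<alpha>) / c ^ k) powr p * norm (U (a (c1 k))) powr p"
      unfolding a'_def dk U_scaleR[OF U aB(1)] norm_scaleR abs_of_nonneg[OF nn]
      by (rule powr_mult)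
    have nb: "norm (U (b' \<alpha>)) powr p = (real (mc \<alpha>) / c ^ k) powr p * norm (U (b (c1 k))) powr p"
      unfolding b'_def dk U_scaleR[OF U aB(2)] norm_scaleR abs_of_nonneg[OF nn]
      by (rule powr_mult)
    show ?thesis unfolding tf_def na nb D_def by (simp add: algebra_simps)
  qed
  obtain w where w: "w \<in> unit_disc1" "z = \<rho> *\<^sub>R w" using z by blast
  define q where "q = cmod (z $ 1)"
  have q: "0 \<le> q" "q \<le> \<rho>"
  proof -
    have "q = \<rho> * cmod (w $ 1)" unfolding q_def w(2) using \<rho>0 by (simp add: abs_of_nonneg)
    moreover have "cmod (w $ 1) < 1" using w(1) unfolding unit_disc1_def by simp
    ultimately show "q \<le> \<rho>" using \<rho>0 by (simp add: mult_left_le)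
  qed (simp add: q_def)
  define tg where "tg = (\<lambda>\<beta>. (norm (U (a \<beta>)) powr p + norm (U (b \<beta>)) powr p) * cmod (monom z \<beta>) powr p)"
  have tgc: "tg (c1 k) = D k * (q powr p) ^ k" for k
    unfolding tg_def D_def q_def by (simp add: monom_1 c1_def norm_power powr_power_nat)
  have tg0: "\<And>\<beta>. 0 \<le> tg \<beta>" by (simp add: tg_def)
  have "\<forall>F. finite F \<longrightarrow> sum tg F \<le> lam powr p * supnorm unit_disc1 g powr p"
  proof (intro allI impI)
    fix F :: "(1 \<Rightarrow> nat) set" assume F: "finite F"
    define K where "K = c1 -` F"
    have K: "finite K" unfolding K_def by (rule finite_vimageI[OF F]) (use c1_bij bij_is_inj in auto)
    have FK: "F = c1 ` K" unfolding K_def using c1_bij by (auto simp: bij_def surj_def image_iff) 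
    have "sum tg F = (\<Sum>k\<in>K. tg (c1 k))"
    proof -
      have "inj_on c1 K" using c1_bij bij_is_inj inj_on_subset by blast
      then show ?thesis unfolding FK by (simp add: sum.reindex)
    qed
    also have "\<dots> \<le> (\<Sum>k\<in>K. sum tf (Ak k))"
    proof (rule sum_mono)
      fix k
      have "tg (c1 k) \<le> (\<Sum>\<alpha>\<in>Ak k. (real (mc \<alpha>) / c ^ k) powr p * D k * rmonom r \<alpha> powr p)"
        unfolding tgc
        by (rule perk[OF p c1 _ _ q \<rho>[folded c_def]]) (use r(1) in \<open>auto simp: D_def\<close>)
      also have "\<dots> = sum tf (Ak k)" by (intro sum.cong refl) (simp add: tf_eq)
      finally show "tg (c1 k) \<le> sum tf (Ak k)" .
    qed
    also have "\<dots> = sum tf (\<Union>k\<in>K. Ak k)"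
      by (rule sum.UNION_disjoint[symmetric]) (use finite_Ak K in \<open>auto simp: Ak_def\<close>)
    also have "\<dots> \<le> lam powr p * supnorm (unit_ball_N N) f powr p"
      by (rule finf) (auto simp: K finite_Ak)
    also have "\<dots> \<le> lam powr p * supnorm unit_disc1 g powr p"
      using sup_le supf0 p by (intro mult_left_mono powr_mono2) auto
    finally show "sum tg F \<le> lam powr p * supnorm unit_disc1 g powr p" .
  qed
  then have "nnsum_le tg (lam powr p * supnorm unit_disc1 g powr p)"
    using nnsum_le_iff[of tg] tg0 by simp
  then show "nnsum_le (\<lambda>\<alpha>. (norm (U (a \<alpha>)) powr p + norm (U (b \<alpha>)) powr p) * cmod (monom z \<alpha>) powr p)
        (lam powr p * supnorm unit_disc1 g powr p)" unfolding tg_def .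
qed



theorem mainTheorem13:
  fixes J :: "'h::{real_inner,complete_space} \<Rightarrow>\<^sub>L 'h"
    and Jy :: "'y::banach \<Rightarrow> 'y"
    and U :: "('h \<Rightarrow>\<^sub>L 'h) \<Rightarrow> 'y"
    and N :: "complex ^ 'n::finite \<Rightarrow> real"
    and p lam :: real
  assumes "hilbert_cstruct J"
    and "banach_cstruct Jy"
    and "bounded_clinear_U J Jy U"
    and "\<exists>T\<in>Bop J. U T \<noteq> 0"
    and "opnorm_U J U < lam"
    and "1 \<le> p"
    and "is_cnorm N"
    and "normalized_1_unconditional N"
  shows "Rlam J U lam unit_disc1 p / real CARD('n) \<le> APlam J U lam (unit_ball_N N) p
       \<and> APlam J U lam (unit_ball_N N) p
           \<le> id_to_l1_norm N * Rlam J U lam unit_disc1 p / real CARD('n) powr (1 / p)"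
proof -
  note hJ = assms(1) and U = assms(3) and lamU = assms(5) and p = assms(6) and N = assms(7,8)
  obtain T where T: "T \<in> Bop J" "U T \<noteq> 0" using assms(4) by blast
  have opp: "0 < opnorm_U J U" by (rule opnorm_nonneg[OF U T])
  then have op0: "0 \<le> opnorm_U J U" by simp
  have lam0: "0 \<le> lam" using opp lamU by simp
  define n where "n = real CARD('n)"
  have n0: "0 < n" unfolding n_def by simp
  define c where "c = id_to_l1_norm N"
  have c1: "1 \<le> c" unfolding c_def by (rule l1_norm_ge1[OF N])
  define Bd where "Bd = lam * norm T / norm (U T)"
  define Rs where "Rs = {r. r \<ge> 0 \<and> Rcond J U lam unit_disc1 p r}"
  define APs where "APs = {(\<Sum>i\<in>UNIV. r $ i) / real CARD('n) | r :: real ^ 'n. (\<forall>i. r $ i \<ge> 0) \<and> APcond J U lam (unit_ball_N N) p r}"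
  have R_eq: "Rlam J U lam unit_disc1 p = Sup Rs" unfolding Rs_def by (rule Rlam_eq)
  have AP_eq: "APlam J U lam (unit_ball_N N) p = Sup APs" unfolding APs_def by (rule APlam_eq)
  have disc0: "0 \<in> unit_disc1" unfolding unit_disc1_def by simp
  have ball0: "0 \<in> unit_ball_N N" using N_zero[OF N(1)] unfolding unit_ball_N_def by auto
  have Rs0: "0 \<in> Rs" unfolding Rs_def using Rcond_zero[OF U lamU op0 p disc0] by simp
  have Rs_bdd: "bdd_above Rs"
    by (rule bdd_aboveI[of _ Bd]) (use R_bdd[OF hJ U T p lam0] in \<open>auto simp: Rs_def Bd_def\<close>)
  have APs0: "0 \<in> APs"
  proof -
    have "APcond J U lam (unit_ball_N N) p 0" by (rule APcond_zero[OF U lamU op0 p ball0])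
    then have "(\<Sum>i\<in>UNIV. (0::real ^ 'n) $ i) / real CARD('n) \<in> APs"
      unfolding APs_def mem_Collect_eq by (intro exI[of _ "0::real ^ 'n"]) simp
    then show ?thesis by simp
  qed
  have APs_bdd: "bdd_above APs"
  proof (rule bdd_aboveI[of _ Bd])
    fix y assume "y \<in> APs"
    then obtain r :: "real ^ 'n" where r: "y = (\<Sum>i\<in>UNIV. r $ i) / real CARD('n)"
      "\<forall>i. r $ i \<ge> 0" "APcond J U lam (unit_ball_N N) p r" unfolding APs_def by blast
    have "(\<Sum>i\<in>UNIV. r $ i) \<le> (\<Sum>i\<in>(UNIV::'n set). Bd)"
      by (intro sum_mono) (use AP_bdd[OF hJ U T p lam0 N r(2,3)] in \<open>auto simp: Bd_def\<close>)
    then have "y * real CARD('n) \<le> Bd * real CARD('n)" using r(1) by (simp add: mult.commute)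
    then show "y \<le> Bd" by simp
  qed
  have AP0: "0 \<le> Sup APs" using APs0 APs_bdd by (rule cSup_upper)
  obtain i0 :: 'n where True by blast
  have lower: "Sup Rs \<le> n * Sup APs"
  proof (rule cSup_least)
    show "Rs \<noteq> {}" using Rs0 by blast
    fix \<rho> assume "\<rho> \<in> Rs"
    then have \<rho>: "0 \<le> \<rho>" "Rcond J U lam unit_disc1 p \<rho>" unfolding Rs_def by auto
    show "\<rho> \<le> n * Sup APs"
    proof (cases "\<rho> = 0")
      case True then show ?thesis using AP0 n0 by simp
    next
      case False
      then have "0 < \<rho>" using \<rho> by simp
      then show ?thesis
      proof (rule dense_le_bounded)
        fix w assume w: "0 < w" "w < \<rho>"
        define r :: "real ^ 'n" where "r = (\<chi> i. if i = i0 then w else 0)"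
        have "APcond J U lam (unit_ball_N N) p r"
          unfolding r_def by (rule LB_elem[OF N p lam0 \<rho>(2)]) (use w in auto)
        moreover have "\<forall>i. r $ i \<ge> 0" using w unfolding r_def by simp
        moreover have "(\<Sum>i\<in>UNIV. r $ i) = w" unfolding r_def by (simp add: sum.delta)
        ultimately have "w / n \<in> APs"
          unfolding APs_def n_def mem_Collect_eq by (intro exI[of _ r]) simp
        then have "w / n \<le> Sup APs" using APs_bdd by (rule cSup_upper)
        then show "w \<le> n * Sup APs" using n0 by (simp add: field_simps)
      qed
    qed
  qed
  have upper: "Sup APs \<le> c * Sup Rs / n powr (1 / p)"
  proof (rule cSup_least)
    show "APs \<noteq> {}" using APs0 by blast
    fix y assume "y \<in> APs"
    then obtain r :: "real ^ 'n" where r: "y = (\<Sum>i\<in>UNIV. r $ i) / real CARD('n)"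
      "\<forall>i. r $ i \<ge> 0" "APcond J U lam (unit_ball_N N) p r" unfolding APs_def by blast
    define \<rho> where "\<rho> = real CARD('n) powr (1 / p) * ((\<Sum>i\<in>UNIV. r $ i) / real CARD('n)) / id_to_l1_norm N"
    have Rc: "Rcond J U lam unit_disc1 p \<rho>"
      by (rule UB_Rcond[OF hJ U N p lam0 r(2,3) \<rho>_def])
    have y0: "0 \<le> y" using r by (simp add: sum_nonneg)
    have \<rho>y: "\<rho> = n powr (1 / p) * y / c" unfolding \<rho>_def r(1) n_def c_def ..
    have "0 \<le> \<rho>" unfolding \<rho>y using y0 c1 by simp
    then have "\<rho> \<in> Rs" unfolding Rs_def using Rc by simp
    then have "\<rho> \<le> Sup Rs" using Rs_bdd by (rule cSup_upper)
    then have "n powr (1 / p) * y \<le> c * Sup Rs" unfolding \<rho>y using c1 by (simp add: field_simps)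
    moreover have "0 < n powr (1 / p)" using n0 by simp
    ultimately show "y \<le> c * Sup Rs / n powr (1 / p)" by (simp add: field_simps)
  qed
  show ?thesis
    unfolding R_eq AP_eq c_def[symmetric] n_def[symmetric]
    using lower upper n0 by (simp add: divide_le_eq mult.commute)
qed

end
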